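(* Let $k$ be an infinite field of characteristic $0$ and let $W=(L,V)=\big(L(x_1,\dots,x_n),\bigoplus_{i=1}^nA(x_1,\dots,x_n)y_i\big)$ be the free representation with $n$ Lie-algebra generators and $n$ module generators. Then $(L\oplus V,p_V)$, with bracket $[l_1+v_1,l_2+v_2]=[l_1,l_2]+l_1\circ v_2-l_2\circ v_1$ and $p_V(l+v)=v$, is a free Lie algebra with projection-derivation with the $n$ free generators $m_i=x_i+y_i$, $1\le i\le n$.
   Context: $L(x_1,\dots,x_n)$ is the free Lie algebra over $k$, $A(x_1,\dots,x_n)$ the free associative algebra with unit (universal enveloping algebra of it), acting on the free module $\bigoplus_i A(x_1,\dots,x_n)y_i$. A Lie algebra with projection-derivation is a Lie algebra $M$ with linear $p:M\to M$ such that $p^2=p$ and $p[m_1,m_2]=[pm_1,m_2]+[m_1,pm_2]$; homomorphisms are Lie homomorphisms commuting with $p$. Free means: every map of the generators into any Lie algebra with projection-derivation extends uniquely to a homomorphism. *)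

theory Defs
  imports Main
begin

definition lie_pd_on ::
  "'a set \<Rightarrow> ('a \<Rightarrow> 'a \<Rightarrow> 'a) \<Rightarrow> 'a \<Rightarrow> ('k::field \<Rightarrow> 'a \<Rightarrow> 'a)
     \<Rightarrow> ('a \<Rightarrow> 'a \<Rightarrow> 'a) \<Rightarrow> ('a \<Rightarrow> 'a) \<Rightarrow> bool" where
  "lie_pd_on S add z sc br p \<longleftrightarrow>
     (\<forall>x\<in>S. \<forall>y\<in>S. add x y \<in> S) \<and> z \<in> S \<and> (\<forall>c. \<forall>x\<in>S. sc c x \<in> S) \<and>
     (\<forall>x\<in>S. \<forall>y\<in>S. br x y \<in> S) \<and> (\<forall>x\<in>S. p x \<in> S) \<and>
     \<comment> \<open>vector space axioms\<close>
     (\<forall>x\<in>S. \<forall>y\<in>S. \<forall>w\<in>S. add (add x y) w = add x (add y w)) \<and>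
     (\<forall>x\<in>S. \<forall>y\<in>S. add x y = add y x) \<and>
     (\<forall>x\<in>S. add z x = x) \<and>
     (\<forall>x\<in>S. add x (sc (-1) x) = z) \<and>
     (\<forall>c. \<forall>x\<in>S. \<forall>y\<in>S. sc c (add x y) = add (sc c x) (sc c y)) \<and>
     (\<forall>c d. \<forall>x\<in>S. sc (c + d) x = add (sc c x) (sc d x)) \<and>
     (\<forall>c d. \<forall>x\<in>S. sc c (sc d x) = sc (c * d) x) \<and>
     (\<forall>x\<in>S. sc 1 x = x) \<and>
     \<comment> \<open>Lie algebra axioms\<close>
     (\<forall>x\<in>S. \<forall>y\<in>S. \<forall>w\<in>S. br (add x y) w = add (br x w) (br y w)) \<and>
     (\<forall>x\<in>S. \<forall>y\<in>S. \<forall>w\<in>S. br w (add x y) = add (br w x) (br w y)) \<and>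
     (\<forall>c. \<forall>x\<in>S. \<forall>y\<in>S. br (sc c x) y = sc c (br x y)) \<and>
     (\<forall>c. \<forall>x\<in>S. \<forall>y\<in>S. br x (sc c y) = sc c (br x y)) \<and>
     (\<forall>x\<in>S. br x x = z) \<and>
     (\<forall>x\<in>S. \<forall>y\<in>S. \<forall>w\<in>S. add (add (br x (br y w)) (br y (br w x))) (br w (br x y)) = z) \<and>
     \<comment> \<open>projection-derivation\<close>
     (\<forall>x\<in>S. \<forall>y\<in>S. p (add x y) = add (p x) (p y)) \<and>
     (\<forall>c. \<forall>x\<in>S. p (sc c x) = sc c (p x)) \<and>
     (\<forall>x\<in>S. p (p x) = p x) \<and>
     (\<forall>x\<in>S. \<forall>y\<in>S. p (br x y) = add (br (p x) y) (br x (p y)))"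

definition lie_pd_hom ::
  "'a set \<Rightarrow> ('a \<Rightarrow> 'a \<Rightarrow> 'a) \<Rightarrow> ('k::field \<Rightarrow> 'a \<Rightarrow> 'a) \<Rightarrow> ('a \<Rightarrow> 'a \<Rightarrow> 'a) \<Rightarrow> ('a \<Rightarrow> 'a)
   \<Rightarrow> 'b set \<Rightarrow> ('b \<Rightarrow> 'b \<Rightarrow> 'b) \<Rightarrow> ('k \<Rightarrow> 'b \<Rightarrow> 'b) \<Rightarrow> ('b \<Rightarrow> 'b \<Rightarrow> 'b) \<Rightarrow> ('b \<Rightarrow> 'b)
   \<Rightarrow> ('a \<Rightarrow> 'b) \<Rightarrow> bool" where
  "lie_pd_hom S addS scS brS pS T addT scT brT pT h \<longleftrightarrow>
     (\<forall>x\<in>S. h x \<in> T) \<and>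
     (\<forall>x\<in>S. \<forall>y\<in>S. h (addS x y) = addT (h x) (h y)) \<and>
     (\<forall>c. \<forall>x\<in>S. h (scS c x) = scT c (h x)) \<and>
     (\<forall>x\<in>S. \<forall>y\<in>S. h (brS x y) = brT (h x) (h y)) \<and>
     (\<forall>x\<in>S. h (pS x) = pT (h x))"

text \<open>A noncommutative polynomial is its coefficient function on words (letters are
  natural numbers; letter i-1 stands for x_i).\<close>

type_synonym 'k ncpoly = "nat list \<Rightarrow> 'k"

definition nc_zero :: "'k::field ncpoly" where "nc_zero = (\<lambda>w. 0)"
definition nc_one :: "'k::field ncpoly" where "nc_one = (\<lambda>w. if w = [] then 1 else 0)"
definition nc_var :: "nat \<Rightarrow> 'k::field ncpoly" where "nc_var i = (\<lambda>w. if w = [i] then 1 else 0)"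
definition nc_add :: "'k::field ncpoly \<Rightarrow> 'k ncpoly \<Rightarrow> 'k ncpoly" where
  "nc_add a b = (\<lambda>w. a w + b w)"
definition nc_smult :: "'k::field \<Rightarrow> 'k ncpoly \<Rightarrow> 'k ncpoly" where
  "nc_smult c a = (\<lambda>w. c * a w)"
definition nc_mul :: "'k::field ncpoly \<Rightarrow> 'k ncpoly \<Rightarrow> 'k ncpoly" where
  "nc_mul a b = (\<lambda>w. \<Sum>i\<le>length w. a (take i w) * b (drop i w))"
definition nc_comm :: "'k::field ncpoly \<Rightarrow> 'k ncpoly \<Rightarrow> 'k ncpoly" where
  "nc_comm a b = nc_add (nc_mul a b) (nc_smult (-1) (nc_mul b a))"

definition free_assoc :: "nat \<Rightarrow> 'k::field ncpoly set" where
  "free_assoc n = {a. finite {w. a w \<noteq> 0} \<and> (\<forall>w. a w \<noteq> 0 \<longrightarrow> (\<forall>j\<in>set w. j < n))}"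

text \<open>The free Lie algebra L(x_1..x_n), realised as the Lie subalgebra of A(x_1..x_n)
  (with commutator bracket) generated by x_1..x_n.\<close>
inductive_set free_lie :: "nat \<Rightarrow> 'k::field ncpoly set" for n where
  fl_zero: "nc_zero \<in> free_lie n"
| fl_var: "i < n \<Longrightarrow> nc_var i \<in> free_lie n"
| fl_add: "a \<in> free_lie n \<Longrightarrow> b \<in> free_lie n \<Longrightarrow> nc_add a b \<in> free_lie n"
| fl_smult: "a \<in> free_lie n \<Longrightarrow> nc_smult c a \<in> free_lie n"
| fl_comm: "a \<in> free_lie n \<Longrightarrow> b \<in> free_lie n \<Longrightarrow> nc_comm a b \<in> free_lie n"

text \<open>An element of V is the family of its coefficients v i in A (coefficient of y_(i+1)).\<close>
definition free_module :: "nat \<Rightarrow> (nat \<Rightarrow> 'k::field ncpoly) set" where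
  "free_module n = {v. (\<forall>i<n. v i \<in> free_assoc n) \<and> (\<forall>i. n \<le> i \<longrightarrow> v i = nc_zero)}"

definition mod_gen :: "nat \<Rightarrow> nat \<Rightarrow> 'k::field ncpoly" where
  "mod_gen i = (\<lambda>j. if j = i then nc_one else nc_zero)"

text \<open>Action of L on V through the embedding into A = U(L): l o (a y_i) = (l a) y_i.\<close>
definition lie_act :: "'k::field ncpoly \<Rightarrow> (nat \<Rightarrow> 'k ncpoly) \<Rightarrow> (nat \<Rightarrow> 'k ncpoly)" where
  "lie_act l v = (\<lambda>i. nc_mul l (v i))"

type_synonym 'k lv = "'k ncpoly \<times> (nat \<Rightarrow> 'k ncpoly)"

definition lv_carrier :: "nat \<Rightarrow> 'k::field lv set" where
  "lv_carrier n = free_lie n \<times> free_module n"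

definition lv_add :: "'k::field lv \<Rightarrow> 'k lv \<Rightarrow> 'k lv" where
  "lv_add x y = (nc_add (fst x) (fst y), \<lambda>i. nc_add (snd x i) (snd y i))"

definition lv_zero :: "'k::field lv" where
  "lv_zero = (nc_zero, \<lambda>i. nc_zero)"

definition lv_smult :: "'k::field \<Rightarrow> 'k lv \<Rightarrow> 'k lv" where
  "lv_smult c x = (nc_smult c (fst x), \<lambda>i. nc_smult c (snd x i))"

definition lv_bracket :: "'k::field lv \<Rightarrow> 'k lv \<Rightarrow> 'k lv" where
  "lv_bracket x y = (nc_comm (fst x) (fst y),
      \<lambda>i. nc_add (lie_act (fst x) (snd y) i) (nc_smult (-1) (lie_act (fst y) (snd x) i)))"

definition lv_proj :: "'k::field lv \<Rightarrow> 'k lv" where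
  "lv_proj x = (nc_zero, snd x)"

text \<open>Generators m_i = x_i + y_i (indexed from 0).\<close>
definition lv_gen :: "nat \<Rightarrow> 'k::field lv" where
  "lv_gen i = (nc_var i, mod_gen i)"

end

theory Submission
  imports Defs "HOL-Algebra.FiniteProduct"
begin



lemma nc_mul_Nil: "nc_mul a b [] = a [] * b []"
  by (simp add: nc_mul_def)

lemma nc_mul_Cons: "nc_mul a b (x#w) = a [] * b (x#w) + nc_mul (\<lambda>u. a (x#u)) b w"
  unfolding nc_mul_def
  by (simp add: sum.atMost_Suc_shift del: sum.atMost_Suc)

lemma nc_mul_addL: "nc_mul (\<lambda>u. f u + g u) c = (\<lambda>w. nc_mul f c w + nc_mul g c w)"
  by (simp add: nc_mul_def fun_eq_iff distrib_right sum.distrib)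
lemma nc_mul_addR: "nc_mul c (\<lambda>u. f u + g u) = (\<lambda>w. nc_mul c f w + nc_mul c g w)"
  by (simp add: nc_mul_def fun_eq_iff distrib_left sum.distrib)
lemma nc_mul_smultL: "nc_mul (\<lambda>u. k * f u) c = (\<lambda>w. k * nc_mul f c w)"
  by (simp add: nc_mul_def fun_eq_iff sum_distrib_left mult.assoc)
lemma nc_mul_smultR: "nc_mul c (\<lambda>u. k * f u) = (\<lambda>w. k * nc_mul c f w)"
  by (simp add: nc_mul_def fun_eq_iff sum_distrib_left mult_ac)

lemma nc_mul_assoc: "nc_mul (nc_mul a b) c w = nc_mul a (nc_mul b c) w"
proof (induction w arbitrary: a b c)
  case Nil then show ?case by (simp add: nc_mul_Nil mult.assoc)
next
  case (Cons x w)
  have e: "(\<lambda>u. nc_mul a b (x#u)) = (\<lambda>u. a [] * b (x#u) + nc_mul (\<lambda>u. a (x#u)) b u)"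
    by (simp add: nc_mul_Cons)
  show ?case
    by (simp add: nc_mul_Cons e nc_mul_addL nc_mul_smultL Cons.IH nc_mul_Nil algebra_simps)
qed

lemma nc_mul_assoc': "nc_mul (nc_mul a b) c = nc_mul a (nc_mul b c)"
  using nc_mul_assoc by blast

lemma nc_mul_zeroL: "nc_mul (\<lambda>u. 0) c = (\<lambda>w. 0)"
  by (simp add: nc_mul_def)
lemma nc_mul_zeroR: "nc_mul c (\<lambda>u. 0) = (\<lambda>w. 0)"
  by (simp add: nc_mul_def)

lemma nc_mul_diffL: "nc_mul (\<lambda>u. f u - g u) c = (\<lambda>w. nc_mul f c w - nc_mul g c w)"
  by (simp add: nc_mul_def fun_eq_iff left_diff_distrib sum_subtractf)
lemma nc_mul_diffR: "nc_mul c (\<lambda>u. f u - g u) = (\<lambda>w. nc_mul c f w - nc_mul c g w)"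
  by (simp add: nc_mul_def fun_eq_iff right_diff_distrib sum_subtractf)
lemma nc_mul_minusL: "nc_mul (\<lambda>u. - f u) c = (\<lambda>w. - nc_mul f c w)"
  by (simp add: nc_mul_def fun_eq_iff sum_negf)
lemma nc_mul_minusR: "nc_mul c (\<lambda>u. - f u) = (\<lambda>w. - nc_mul c f w)"
  by (simp add: nc_mul_def fun_eq_iff sum_negf)

lemmas ncs = nc_add_def nc_smult_def nc_zero_def nc_comm_def lv_add_def lv_zero_def lv_smult_def
  lv_bracket_def lv_proj_def lie_act_def nc_mul_addL nc_mul_addR nc_mul_smultL nc_mul_smultR
  nc_mul_assoc' nc_mul_zeroL nc_mul_zeroR nc_mul_diffL nc_mul_diffR nc_mul_minusL nc_mul_minusR

lemma lv_jacobi: "lv_add (lv_add (lv_bracket x (lv_bracket y w)) (lv_bracket y (lv_bracket w x)))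
   (lv_bracket w (lv_bracket x y)) = (lv_zero :: 'k::field lv)"
  by (simp add: ncs fun_eq_iff algebra_simps)

lemma lv_proj_der: "lv_proj (lv_bracket x y) = lv_add (lv_bracket (lv_proj x) y) (lv_bracket x (lv_proj y))"
  by (simp add: ncs fun_eq_iff algebra_simps)

lemma fa_add: "a \<in> free_assoc n \<Longrightarrow> b \<in> free_assoc n \<Longrightarrow> nc_add a b \<in> free_assoc n"
proof -
  assume a: "a \<in> free_assoc n" and b: "b \<in> free_assoc n"
  have "{w. nc_add a b w \<noteq> 0} \<subseteq> {w. a w \<noteq> 0} \<union> {w. b w \<noteq> 0}" by (auto simp: nc_add_def)
  with a b show ?thesis unfolding free_assoc_def
    by (auto simp: nc_add_def intro: finite_subset)
qed

lemma fa_smult: "a \<in> free_assoc n \<Longrightarrow> nc_smult c a \<in> free_assoc n"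
proof -
  assume a: "a \<in> free_assoc n"
  have "{w. nc_smult c a w \<noteq> 0} \<subseteq> {w. a w \<noteq> 0}" by (auto simp: nc_smult_def)
  with a show ?thesis unfolding free_assoc_def
    by (auto simp: nc_smult_def intro: finite_subset)
qed

lemma fa_zero: "nc_zero \<in> free_assoc n"
  by (simp add: free_assoc_def nc_zero_def)
lemma fa_one: "nc_one \<in> free_assoc n"
  by (simp add: free_assoc_def nc_one_def)
lemma fa_var: "i < n \<Longrightarrow> nc_var i \<in> free_assoc n"
  by (simp add: free_assoc_def nc_var_def)

lemma nc_mul_nz: "nc_mul a b w \<noteq> 0 \<Longrightarrow> \<exists>u v. w = u @ v \<and> a u \<noteq> 0 \<and> b v \<noteq> 0"
proof -
  assume "nc_mul a b w \<noteq> 0"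
  then obtain i where "i \<le> length w" "a (take i w) * b (drop i w) \<noteq> 0"
    unfolding nc_mul_def by (meson sum.not_neutral_contains_not_neutral atMost_iff)
  then show ?thesis by (intro exI[of _ "take i w"] exI[of _ "drop i w"]) auto
qed

lemma fa_mul: "a \<in> free_assoc n \<Longrightarrow> b \<in> free_assoc n \<Longrightarrow> nc_mul a b \<in> free_assoc n"
proof -
  assume a: "a \<in> free_assoc n" and b: "b \<in> free_assoc n"
  have "{w. nc_mul a b w \<noteq> 0} \<subseteq> (\<lambda>(u,v). u @ v) ` ({w. a w \<noteq> 0} \<times> {w. b w \<noteq> 0})"
    by (auto dest!: nc_mul_nz)
  moreover have "finite ((\<lambda>(u,v). u @ v) ` ({w. a w \<noteq> 0} \<times> {w. b w \<noteq> 0}))"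
    using a b by (simp add: free_assoc_def)
  ultimately have "finite {w. nc_mul a b w \<noteq> 0}" by (rule finite_subset)
  moreover have "\<forall>w. nc_mul a b w \<noteq> 0 \<longrightarrow> (\<forall>j\<in>set w. j < n)"
    using a b by (fastforce simp: free_assoc_def dest!: nc_mul_nz)
  ultimately show ?thesis by (simp add: free_assoc_def)
qed

lemma fa_comm: "a \<in> free_assoc n \<Longrightarrow> b \<in> free_assoc n \<Longrightarrow> nc_comm a b \<in> free_assoc n"
  by (simp add: nc_comm_def fa_add fa_smult fa_mul)

lemma fl_fa: "l \<in> free_lie n \<Longrightarrow> l \<in> free_assoc n"
  by (induction rule: free_lie.induct) (auto intro: fa_zero fa_var fa_add fa_smult fa_comm)

lemma fl_const: "l \<in> free_lie n \<Longrightarrow> l [] = 0"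
  by (induction rule: free_lie.induct) (auto simp: nc_zero_def nc_var_def nc_add_def nc_smult_def nc_comm_def nc_mul_Nil)

lemma lv_add_closed: "x \<in> lv_carrier n \<Longrightarrow> y \<in> lv_carrier n \<Longrightarrow> lv_add x y \<in> lv_carrier n"
  by (auto simp: lv_carrier_def lv_add_def free_module_def intro: fl_add fa_add)
     (simp add: nc_add_def nc_zero_def)

lemma lv_smult_closed: "x \<in> lv_carrier n \<Longrightarrow> lv_smult c x \<in> lv_carrier n"
  by (auto simp: lv_carrier_def lv_smult_def free_module_def intro: fl_smult fa_smult)
     (simp add: nc_smult_def nc_zero_def)

lemma lv_zero_closed: "lv_zero \<in> lv_carrier n"
  by (auto simp: lv_carrier_def lv_zero_def free_module_def intro: fl_zero fa_zero)

lemma lv_proj_closed: "x \<in> lv_carrier n \<Longrightarrow> lv_proj x \<in> lv_carrier n"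
  by (auto simp: lv_carrier_def lv_proj_def intro: fl_zero)

lemma lv_bracket_closed: "x \<in> lv_carrier n \<Longrightarrow> y \<in> lv_carrier n \<Longrightarrow> lv_bracket x y \<in> lv_carrier n"
proof -
  assume x: "x \<in> lv_carrier n" and y: "y \<in> lv_carrier n"
  have "nc_add (nc_mul a nc_zero) (nc_smult (- 1) (nc_mul b nc_zero)) = nc_zero" for a b :: "'a ncpoly"
    by (simp add: ncs)
  with x y show ?thesis
    by (auto simp: lv_carrier_def lv_bracket_def free_module_def lie_act_def
       intro!: fl_comm fa_add fa_smult fa_mul dest: fl_fa)
qed

lemma lv_gen_closed: "i < n \<Longrightarrow> lv_gen i \<in> lv_carrier n"
  by (auto simp: lv_carrier_def lv_gen_def free_module_def mod_gen_def intro: fl_var fa_one fa_zero)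

lemma lv_lie_pd: "lie_pd_on (lv_carrier n) lv_add lv_zero (lv_smult :: 'k::field \<Rightarrow> _) lv_bracket lv_proj"
  unfolding lie_pd_on_def
  apply (intro conjI ballI allI)
  apply (simp_all add: lv_add_closed lv_zero_closed lv_smult_closed lv_bracket_closed lv_proj_closed
       lv_jacobi lv_proj_der)
  apply (simp_all add: ncs fun_eq_iff algebra_simps)
  done

definition nc_mono :: "nat list \<Rightarrow> 'k::field ncpoly" where
  "nc_mono u = (\<lambda>w. if w = u then 1 else 0)"

abbreviation fs :: "'k::field ncpoly \<Rightarrow> bool" where "fs a \<equiv> finite {w. a w \<noteq> 0}"

lemma fs_zero[simp]: "fs (\<lambda>w. 0)" by simp
lemma fs_mono[simp]: "fs (nc_mono u)" by (simp add: nc_mono_def)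
lemma fs_add: "fs a \<Longrightarrow> fs b \<Longrightarrow> fs (\<lambda>w. a w + b w)"
  by (rule finite_subset[of _ "{w. a w \<noteq> 0} \<union> {w. b w \<noteq> 0}"]) auto
lemma fs_smult: "fs a \<Longrightarrow> fs (\<lambda>w. c * a w)"
  by (rule finite_subset[of _ "{w. a w \<noteq> 0}"]) auto
lemma fs_mul: "fs a \<Longrightarrow> fs b \<Longrightarrow> fs (nc_mul a b)"
proof -
  assume a: "fs a" and b: "fs b"
  have "{w. nc_mul a b w \<noteq> 0} \<subseteq> (\<lambda>(u,v). u @ v) ` ({w. a w \<noteq> 0} \<times> {w. b w \<noteq> 0})"
    by (auto dest!: nc_mul_nz)
  moreover have "finite ((\<lambda>(u,v). u @ v) ` ({w. a w \<noteq> 0} \<times> {w. b w \<noteq> 0}))"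
    using a b by simp
  ultimately show ?thesis by (rule finite_subset)
qed
lemma fa_fs: "a \<in> free_assoc n \<Longrightarrow> fs a" by (simp add: free_assoc_def)

lemma fs_induct[consumes 1, case_names zero step]:
  assumes fin: "fs a" and z: "P (\<lambda>w. 0)"
    and step: "\<And>b u c. fs b \<Longrightarrow> {w. b w \<noteq> 0} \<subseteq> {w. a w \<noteq> 0} \<Longrightarrow> a u \<noteq> 0 \<Longrightarrow> b u = 0 \<Longrightarrow> P b
       \<Longrightarrow> P (\<lambda>w. b w + c * nc_mono u w)"
  shows "P a"
proof -
  have "\<forall>b. {w. b w \<noteq> 0} \<subseteq> A \<longrightarrow> {w. b w \<noteq> 0} \<subseteq> {w. a w \<noteq> 0} \<longrightarrow> P b" if "finite A" for A
    using that
  proof (induction A rule: finite_induct)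
    case empty
    show ?case
    proof (intro allI impI)
      fix b :: "'a ncpoly"
      assume "{w. b w \<noteq> 0} \<subseteq> {}"
      then have "b = (\<lambda>w. 0)" by auto
      then show "P b" using z by simp
    qed
  next
    case (insert x A)
    show ?case
    proof (intro allI impI)
      fix b :: "'a ncpoly"
      assume b1: "{w. b w \<noteq> 0} \<subseteq> insert x A" and b2: "{w. b w \<noteq> 0} \<subseteq> {w. a w \<noteq> 0}"
      define b' where "b' = b(x := 0)"
      have sb: "{w. b' w \<noteq> 0} \<subseteq> A" using b1 by (auto simp: b'_def)
      have sb2: "{w. b' w \<noteq> 0} \<subseteq> {w. a w \<noteq> 0}" using b2 by (auto simp: b'_def)
      have "P b'" using insert.IH sb sb2 by blast
      show "P b"
      proof (cases "b x = 0")
        case True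
        then have "b' = b" by (auto simp: b'_def)
        then show ?thesis using \<open>P b'\<close> by simp
      next
        case False
        have e: "b = (\<lambda>w. b' w + b x * nc_mono x w)" by (auto simp: b'_def nc_mono_def)
        have "fs b'" using fin sb2 by (rule finite_subset[rotated])
        moreover have "a x \<noteq> 0" using False b2 by auto
        moreover have "b' x = 0" by (simp add: b'_def)
        ultimately have "P (\<lambda>w. b' w + b x * nc_mono x w)" by (rule step[OF _ sb2 _ _ \<open>P b'\<close>])
        then show ?thesis using e by simp
      qed
    qed
  qed
  from this[OF fin, rule_format, of a] show ?thesis by simp
qed

lemma nc_mul_mono_pt: "nc_mul (nc_mono u) (nc_mono v) w = (nc_mono (u @ v) w :: 'a::field)"
proof -
  have "nc_mul (nc_mono u) (nc_mono v) w =
      (\<Sum>i\<le>length w. if i = length u then (if w = u @ v then 1 else 0) else (0::'a))"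
    unfolding nc_mul_def nc_mono_def
  proof (rule sum.cong[OF refl])
    fix i assume "i \<in> {..length w}"
    then have i: "i \<le> length w" by simp
    show "(if take i w = u then 1 else 0) * (if drop i w = v then 1 else 0) =
        (if i = length u then (if w = u @ v then 1 else 0) else (0::'a))"
    proof (cases "i = length u")
      case True
      then show ?thesis using i by (auto simp: append_eq_conv_conj) (metis append_take_drop_id)
    next
      case False
      then have "take i w \<noteq> u" using i by auto
      then show ?thesis using False by simp
    qed
  qed
  also have "\<dots> = nc_mono (u @ v) w"
    by (auto simp: nc_mono_def)
  finally show ?thesis .
qed

lemma nc_mul_mono: "nc_mul (nc_mono u) (nc_mono v) = nc_mono (u @ v)"
  by (rule ext) (rule nc_mul_mono_pt)




inductive_set Hs :: "nat \<Rightarrow> (nat \<times> 'k::field ncpoly) set" for n where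
  H_zero: "(m, nc_zero) \<in> Hs n"
| H_var: "i < n \<Longrightarrow> (1, nc_var i) \<in> Hs n"
| H_add: "(m,a) \<in> Hs n \<Longrightarrow> (m,b) \<in> Hs n \<Longrightarrow> (m, nc_add a b) \<in> Hs n"
| H_smult: "(m,a) \<in> Hs n \<Longrightarrow> (m, nc_smult c a) \<in> Hs n"
| H_comm: "(p,a) \<in> Hs n \<Longrightarrow> (q,b) \<in> Hs n \<Longrightarrow> (p+q, nc_comm a b) \<in> Hs n"

lemma mul_homog: "(\<forall>w. a w \<noteq> 0 \<longrightarrow> length w = p) \<Longrightarrow> (\<forall>w. b w \<noteq> 0 \<longrightarrow> length w = q) \<Longrightarrow>
   nc_mul a b w \<noteq> 0 \<Longrightarrow> length w = p + q"
  by (auto dest!: nc_mul_nz)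

lemma H_props: "(m,u) \<in> Hs n \<Longrightarrow> u \<in> free_assoc n \<and> (\<forall>w. u w \<noteq> 0 \<longrightarrow> length w = m) \<and> u [] = 0"
proof (induction m u rule: Hs.induct)
  case (H_zero m) then show ?case using fa_zero[of n] by (simp add: nc_zero_def)
next
  case (H_var i) then show ?case using fa_var[of i n] by (simp add: nc_var_def)
next
  case (H_add m a b) then show ?case using fa_add[of a n b] by (auto simp: nc_add_def) (metis add_0)
next
  case (H_smult m a c) then show ?case using fa_smult[of a n c] by (auto simp: nc_smult_def)
next
  case (H_comm p a q b)
  have "nc_comm a b w \<noteq> 0 \<Longrightarrow> length w = p + q" for w
  proof -
    assume "nc_comm a b w \<noteq> 0"
    then have "nc_mul a b w \<noteq> 0 \<or> nc_mul b a w \<noteq> 0" by (auto simp: nc_comm_def nc_add_def nc_smult_def)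
    then show ?thesis using H_comm.IH mul_homog[of a p b q w] mul_homog[of b q a p w] by auto
  qed
  then show ?case using H_comm.IH fa_comm[of a n b] by (simp add: nc_comm_def nc_add_def nc_smult_def nc_mul_Nil)
qed

definition nc_hom :: "nat \<Rightarrow> 'k::field ncpoly \<Rightarrow> 'k ncpoly" where
  "nc_hom m a = (\<lambda>w. if length w = m then a w else 0)"

definition nc_sum :: "('x \<Rightarrow> 'k::field ncpoly) \<Rightarrow> 'x set \<Rightarrow> 'k ncpoly" where
  "nc_sum g A = (\<lambda>w. \<Sum>x\<in>A. g x w)"

lemma H_sum: "finite A \<Longrightarrow> (\<forall>x\<in>A. (m, g x) \<in> Hs n) \<Longrightarrow> (m, nc_sum g A) \<in> Hs n"
proof (induction A rule: finite_induct)
  case empty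
  have "nc_sum g {} = nc_zero" by (simp add: nc_sum_def nc_zero_def)
  then show ?case by (simp add: H_zero)
next
  case (insert x A)
  have "nc_sum g (insert x A) = nc_add (g x) (nc_sum g A)"
    using insert by (simp add: nc_sum_def nc_add_def)
  then show ?case using insert by (simp add: H_add)
qed

lemma hom_mul_pt: "nc_hom m (nc_mul a b) w = (\<Sum>p\<le>m. nc_mul (nc_hom p a) (nc_hom (m-p) b) w)"
proof -
  have inner: "nc_mul (nc_hom p a) (nc_hom (m-p) b) w =
      (if length w = m then a (take p w) * b (drop p w) else 0)" if "p \<le> m" for p
  proof (cases "length w = m")
    case True
    have "nc_mul (nc_hom p a) (nc_hom (m-p) b) w = (\<Sum>i\<le>length w. if i = p then a (take i w) * b (drop i w) else 0)"
      unfolding nc_mul_def nc_hom_def by (rule sum.cong) (use True that in auto)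
    also have "\<dots> = a (take p w) * b (drop p w)" using True that by (simp add: sum.delta)
    finally show ?thesis using True by simp
  next
    case False
    have "nc_mul (nc_hom p a) (nc_hom (m-p) b) w = (\<Sum>i\<le>length w. 0)"
      unfolding nc_mul_def nc_hom_def by (rule sum.cong) (use False that in auto)
    then show ?thesis using False by simp
  qed
  have "(\<Sum>p\<le>m. nc_mul (nc_hom p a) (nc_hom (m-p) b) w) =
      (\<Sum>p\<le>m. if length w = m then a (take p w) * b (drop p w) else 0)"
    by (rule sum.cong) (simp_all add: inner)
  then show ?thesis
    by (cases "length w = m") (simp_all add: nc_hom_def nc_mul_def)
qed


lemma sum_atMost_rev: "(\<Sum>p\<le>m. g (m - p)) = (\<Sum>p\<le>(m::nat). (g p :: 'a::comm_monoid_add))"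
  using sum.nat_diff_reindex[of g "Suc m"] by (simp add: lessThan_Suc_atMost)

lemma hom_comm: "nc_hom m (nc_comm a b) = nc_sum (\<lambda>p. nc_comm (nc_hom p a) (nc_hom (m-p) b)) {..m}"
proof (rule ext)
  fix w
  have r: "(\<Sum>p\<le>m. nc_mul (nc_hom (m-p) b) (nc_hom p a) w) = (\<Sum>p\<le>m. nc_mul (nc_hom p b) (nc_hom (m-p) a) w)"
  proof -
    have "(\<Sum>p\<le>m. nc_mul (nc_hom (m-p) b) (nc_hom p a) w) =
        (\<Sum>p\<le>m. (\<lambda>p. nc_mul (nc_hom p b) (nc_hom (m-p) a) w) (m - p))"
      by (rule sum.cong) auto
    then show ?thesis using sum_atMost_rev[of "\<lambda>p. nc_mul (nc_hom p b) (nc_hom (m-p) a) w" m] by (rule trans)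
  qed
  have "nc_hom m (nc_comm a b) w = nc_hom m (nc_mul a b) w - nc_hom m (nc_mul b a) w"
    by (simp add: nc_hom_def nc_comm_def nc_add_def nc_smult_def)
  also have "\<dots> = (\<Sum>p\<le>m. nc_mul (nc_hom p a) (nc_hom (m-p) b) w) - (\<Sum>p\<le>m. nc_mul (nc_hom (m-p) b) (nc_hom p a) w)"
    by (simp add: hom_mul_pt r)
  also have "\<dots> = nc_sum (\<lambda>p. nc_comm (nc_hom p a) (nc_hom (m-p) b)) {..m} w"
    by (simp add: nc_sum_def nc_comm_def nc_add_def nc_smult_def sum_subtractf)
  finally show "nc_hom m (nc_comm a b) w = nc_sum (\<lambda>p. nc_comm (nc_hom p a) (nc_hom (m-p) b)) {..m} w" .
qed


lemma hom_zero: "nc_hom m nc_zero = nc_zero" by (simp add: nc_hom_def nc_zero_def)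
lemma hom_add: "nc_hom m (nc_add a b) = nc_add (nc_hom m a) (nc_hom m b)" by (auto simp: nc_hom_def nc_add_def)
lemma hom_smult: "nc_hom m (nc_smult c a) = nc_smult c (nc_hom m a)" by (auto simp: nc_hom_def nc_smult_def)
lemma hom_var: "nc_hom m (nc_var i) = (if m = 1 then nc_var i else nc_zero)"
  by (auto simp: nc_hom_def nc_var_def nc_zero_def)

lemma fl_hom: "u \<in> free_lie n \<Longrightarrow> (m, nc_hom m u) \<in> Hs n"
proof (induction u arbitrary: m rule: free_lie.induct)
  case fl_zero
  then show ?case by (simp add: H_zero hom_zero)
next
  case (fl_var i)
  show ?case
  proof (cases "m = 1")
    case True
    then show ?thesis using fl_var Hs.H_var[of i n] by (simp add: hom_var)
  next
    case False
    then show ?thesis by (simp add: hom_var H_zero)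
  qed
next
  case (fl_add a b)
  then show ?case by (simp add: H_add hom_add)
next
  case (fl_smult a c)
  then show ?case by (simp add: H_smult hom_smult)
next
  case (fl_comm a b)
  have "(m, nc_comm (nc_hom p a) (nc_hom (m-p) b)) \<in> Hs n" if "p \<le> m" for p
    using H_comm[OF fl_comm.IH(1)[of p] fl_comm.IH(2)[of "m-p"]] that by simp
  then show ?case unfolding hom_comm by (intro H_sum) auto
qed

lemma hom_decomp: assumes "\<forall>w. u w \<noteq> 0 \<longrightarrow> length w \<le> N"
  shows "u = nc_sum (\<lambda>m. nc_hom m u) {..N}"
proof (rule ext)
  fix w
  show "u w = nc_sum (\<lambda>m. nc_hom m u) {..N} w"
    using assms by (auto simp: nc_sum_def nc_hom_def sum.delta')
qed

lemma fs_bound: "fs u \<Longrightarrow> \<exists>N. \<forall>w. u w \<noteq> 0 \<longrightarrow> length w \<le> N"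
proof -
  assume "fs u"
  then have "finite (length ` {w. u w \<noteq> 0})" by simp
  then obtain N where "\<forall>x\<in>length ` {w. u w \<noteq> 0}. x \<le> N" using finite_nat_set_iff_bounded_le by blast
  then show ?thesis by auto
qed




locale lpd =
  fixes T :: "'b set" and addT :: "'b \<Rightarrow> 'b \<Rightarrow> 'b" and zT :: 'b
    and scT :: "'k::field \<Rightarrow> 'b \<Rightarrow> 'b" and brT :: "'b \<Rightarrow> 'b \<Rightarrow> 'b" and pT :: "'b \<Rightarrow> 'b"
  assumes L: "lie_pd_on T addT zT scT brT pT"
begin

lemmas C0 = L[unfolded lie_pd_on_def, THEN conjunct1]
lemmas C1 = L[unfolded lie_pd_on_def, THEN conjunct2, THEN conjunct1]
lemmas C2 = L[unfolded lie_pd_on_def, THEN conjunct2, THEN conjunct2, THEN conjunct1]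
lemmas C3 = L[unfolded lie_pd_on_def, THEN conjunct2, THEN conjunct2, THEN conjunct2, THEN conjunct1]
lemmas C4 = L[unfolded lie_pd_on_def, THEN conjunct2, THEN conjunct2, THEN conjunct2, THEN conjunct2, THEN conjunct1]
lemmas C5 = L[unfolded lie_pd_on_def, THEN conjunct2, THEN conjunct2, THEN conjunct2, THEN conjunct2, THEN conjunct2, THEN conjunct1]
lemmas C6 = L[unfolded lie_pd_on_def, THEN conjunct2, THEN conjunct2, THEN conjunct2, THEN conjunct2, THEN conjunct2, THEN conjunct2, THEN conjunct1]
lemmas C7 = L[unfolded lie_pd_on_def, THEN conjunct2, THEN conjunct2, THEN conjunct2, THEN conjunct2, THEN conjunct2, THEN conjunct2, THEN conjunct2, THEN conjunct1]
lemmas C8 = L[unfolded lie_pd_on_def, THEN conjunct2, THEN conjunct2, THEN conjunct2, THEN conjunct2, THEN conjunct2, THEN conjunct2, THEN conjunct2, THEN conjunct2, THEN conjunct1]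
lemmas C9 = L[unfolded lie_pd_on_def, THEN conjunct2, THEN conjunct2, THEN conjunct2, THEN conjunct2, THEN conjunct2, THEN conjunct2, THEN conjunct2, THEN conjunct2, THEN conjunct2, THEN conjunct1]
lemmas C10 = L[unfolded lie_pd_on_def, THEN conjunct2, THEN conjunct2, THEN conjunct2, THEN conjunct2, THEN conjunct2, THEN conjunct2, THEN conjunct2, THEN conjunct2, THEN conjunct2, THEN conjunct2, THEN conjunct1]
lemmas C11 = L[unfolded lie_pd_on_def, THEN conjunct2, THEN conjunct2, THEN conjunct2, THEN conjunct2, THEN conjunct2, THEN conjunct2, THEN conjunct2, THEN conjunct2, THEN conjunct2, THEN conjunct2, THEN conjunct2, THEN conjunct1]
lemmas C12 = L[unfolded lie_pd_on_def, THEN conjunct2, THEN conjunct2, THEN conjunct2, THEN conjunct2, THEN conjunct2, THEN conjunct2, THEN conjunct2, THEN conjunct2, THEN conjunct2, THEN conjunct2, THEN conjunct2, THEN conjunct2, THEN conjunct1]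
lemmas C13 = L[unfolded lie_pd_on_def, THEN conjunct2, THEN conjunct2, THEN conjunct2, THEN conjunct2, THEN conjunct2, THEN conjunct2, THEN conjunct2, THEN conjunct2, THEN conjunct2, THEN conjunct2, THEN conjunct2, THEN conjunct2, THEN conjunct2, THEN conjunct1]
lemmas C14 = L[unfolded lie_pd_on_def, THEN conjunct2, THEN conjunct2, THEN conjunct2, THEN conjunct2, THEN conjunct2, THEN conjunct2, THEN conjunct2, THEN conjunct2, THEN conjunct2, THEN conjunct2, THEN conjunct2, THEN conjunct2, THEN conjunct2, THEN conjunct2, THEN conjunct1]
lemmas C15 = L[unfolded lie_pd_on_def, THEN conjunct2, THEN conjunct2, THEN conjunct2, THEN conjunct2, THEN conjunct2, THEN conjunct2, THEN conjunct2, THEN conjunct2, THEN conjunct2, THEN conjunct2, THEN conjunct2, THEN conjunct2, THEN conjunct2, THEN conjunct2, THEN conjunct2, THEN conjunct1]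
lemmas C16 = L[unfolded lie_pd_on_def, THEN conjunct2, THEN conjunct2, THEN conjunct2, THEN conjunct2, THEN conjunct2, THEN conjunct2, THEN conjunct2, THEN conjunct2, THEN conjunct2, THEN conjunct2, THEN conjunct2, THEN conjunct2, THEN conjunct2, THEN conjunct2, THEN conjunct2, THEN conjunct2, THEN conjunct1]
lemmas C17 = L[unfolded lie_pd_on_def, THEN conjunct2, THEN conjunct2, THEN conjunct2, THEN conjunct2, THEN conjunct2, THEN conjunct2, THEN conjunct2, THEN conjunct2, THEN conjunct2, THEN conjunct2, THEN conjunct2, THEN conjunct2, THEN conjunct2, THEN conjunct2, THEN conjunct2, THEN conjunct2, THEN conjunct2, THEN conjunct1]
lemmas C18 = L[unfolded lie_pd_on_def, THEN conjunct2, THEN conjunct2, THEN conjunct2, THEN conjunct2, THEN conjunct2, THEN conjunct2, THEN conjunct2, THEN conjunct2, THEN conjunct2, THEN conjunct2, THEN conjunct2, THEN conjunct2, THEN conjunct2, THEN conjunct2, THEN conjunct2, THEN conjunct2, THEN conjunct2, THEN conjunct2, THEN conjunct1]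
lemmas C19 = L[unfolded lie_pd_on_def, THEN conjunct2, THEN conjunct2, THEN conjunct2, THEN conjunct2, THEN conjunct2, THEN conjunct2, THEN conjunct2, THEN conjunct2, THEN conjunct2, THEN conjunct2, THEN conjunct2, THEN conjunct2, THEN conjunct2, THEN conjunct2, THEN conjunct2, THEN conjunct2, THEN conjunct2, THEN conjunct2, THEN conjunct2, THEN conjunct1]
lemmas C20 = L[unfolded lie_pd_on_def, THEN conjunct2, THEN conjunct2, THEN conjunct2, THEN conjunct2, THEN conjunct2, THEN conjunct2, THEN conjunct2, THEN conjunct2, THEN conjunct2, THEN conjunct2, THEN conjunct2, THEN conjunct2, THEN conjunct2, THEN conjunct2, THEN conjunct2, THEN conjunct2, THEN conjunct2, THEN conjunct2, THEN conjunct2, THEN conjunct2, THEN conjunct1]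
lemmas C21 = L[unfolded lie_pd_on_def, THEN conjunct2, THEN conjunct2, THEN conjunct2, THEN conjunct2, THEN conjunct2, THEN conjunct2, THEN conjunct2, THEN conjunct2, THEN conjunct2, THEN conjunct2, THEN conjunct2, THEN conjunct2, THEN conjunct2, THEN conjunct2, THEN conjunct2, THEN conjunct2, THEN conjunct2, THEN conjunct2, THEN conjunct2, THEN conjunct2, THEN conjunct2, THEN conjunct1]
lemmas C22 = L[unfolded lie_pd_on_def, THEN conjunct2, THEN conjunct2, THEN conjunct2, THEN conjunct2, THEN conjunct2, THEN conjunct2, THEN conjunct2, THEN conjunct2, THEN conjunct2, THEN conjunct2, THEN conjunct2, THEN conjunct2, THEN conjunct2, THEN conjunct2, THEN conjunct2, THEN conjunct2, THEN conjunct2, THEN conjunct2, THEN conjunct2, THEN conjunct2, THEN conjunct2, THEN conjunct2]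

lemma add_T[simp]: "x \<in> T \<Longrightarrow> y \<in> T \<Longrightarrow> addT x y \<in> T" using C0 by blast
lemma z_T[simp]: "zT \<in> T" using C1 by blast
lemma sc_T[simp]: "x \<in> T \<Longrightarrow> scT c x \<in> T" using C2 by blast
lemma br_T[simp]: "x \<in> T \<Longrightarrow> y \<in> T \<Longrightarrow> brT x y \<in> T" using C3 by blast
lemma p_T[simp]: "x \<in> T \<Longrightarrow> pT x \<in> T" using C4 by blast
lemma add_assoc: "x \<in> T \<Longrightarrow> y \<in> T \<Longrightarrow> w \<in> T \<Longrightarrow> addT (addT x y) w = addT x (addT y w)"
  using C5 by blast
lemma add_comm: "x \<in> T \<Longrightarrow> y \<in> T \<Longrightarrow> addT x y = addT y x"
  using C6 by blast
lemma add_zL[simp]: "x \<in> T \<Longrightarrow> addT zT x = x" using C7 by blast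
lemma add_neg: "x \<in> T \<Longrightarrow> addT x (scT (-1) x) = zT" using C8 by blast
lemma sc_add: "x \<in> T \<Longrightarrow> y \<in> T \<Longrightarrow> scT c (addT x y) = addT (scT c x) (scT c y)"
  using C9 by blast
lemma add_sc: "x \<in> T \<Longrightarrow> scT (c + d) x = addT (scT c x) (scT d x)"
  using C10 by blast
lemma sc_sc[simp]: "x \<in> T \<Longrightarrow> scT c (scT d x) = scT (c * d) x"
  using C11 by blast
lemma sc_one[simp]: "x \<in> T \<Longrightarrow> scT 1 x = x" using C12 by blast
lemma br_addL: "x \<in> T \<Longrightarrow> y \<in> T \<Longrightarrow> w \<in> T \<Longrightarrow> brT (addT x y) w = addT (brT x w) (brT y w)"
  using C13 by blast
lemma br_addR: "x \<in> T \<Longrightarrow> y \<in> T \<Longrightarrow> w \<in> T \<Longrightarrow> brT w (addT x y) = addT (brT w x) (brT w y)"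
  using C14 by blast
lemma br_scL: "x \<in> T \<Longrightarrow> y \<in> T \<Longrightarrow> brT (scT c x) y = scT c (brT x y)"
  using C15 by blast
lemma br_scR: "x \<in> T \<Longrightarrow> y \<in> T \<Longrightarrow> brT x (scT c y) = scT c (brT x y)"
  using C16 by blast
lemma br_self: "x \<in> T \<Longrightarrow> brT x x = zT" using C17 by blast
lemma jacobi: "x \<in> T \<Longrightarrow> y \<in> T \<Longrightarrow> w \<in> T \<Longrightarrow>
   addT (addT (brT x (brT y w)) (brT y (brT w x))) (brT w (brT x y)) = zT"
  using C18 by blast
lemma p_add: "x \<in> T \<Longrightarrow> y \<in> T \<Longrightarrow> pT (addT x y) = addT (pT x) (pT y)"
  using C19 by blast
lemma p_sc: "x \<in> T \<Longrightarrow> pT (scT c x) = scT c (pT x)" using C20 by blast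
lemma p_p[simp]: "x \<in> T \<Longrightarrow> pT (pT x) = pT x" using C21 by blast
lemma p_br: "x \<in> T \<Longrightarrow> y \<in> T \<Longrightarrow> pT (brT x y) = addT (brT (pT x) y) (brT x (pT y))"
  using C22 by blast

lemma add_zR[simp]: "x \<in> T \<Longrightarrow> addT x zT = x" by (metis add_comm add_zL z_T)

lemma add_lcomm: "x \<in> T \<Longrightarrow> y \<in> T \<Longrightarrow> w \<in> T \<Longrightarrow> addT x (addT y w) = addT y (addT x w)"
  by (metis add_assoc add_comm)

lemmas add_ac = add_assoc add_comm add_lcomm

lemma add_cancel: assumes "x \<in> T" "y \<in> T" "w \<in> T" "addT w x = addT w y" shows "x = y"
proof -
  have "addT (scT (-1) w) (addT w x) = addT (scT (-1) w) (addT w y)" using assms by simp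
  then show ?thesis using assms
    by (metis add_assoc add_comm add_neg add_zL sc_T)
qed

lemma sc_zero[simp]: assumes "x \<in> T" shows "scT 0 x = zT"
proof -
  have "addT (scT 0 x) (scT 0 x) = addT (scT 0 x) zT"
    using add_sc[OF assms, of 0 0] assms by simp
  then show ?thesis using assms by (metis add_cancel sc_T z_T)
qed

lemma sc_zT[simp]: "scT c zT = zT"
  by (metis mult_zero_right sc_sc sc_zero z_T)

lemma br_zL[simp]: "x \<in> T \<Longrightarrow> brT zT x = zT"
  by (metis br_scL sc_zero z_T br_T)
lemma br_zR[simp]: "x \<in> T \<Longrightarrow> brT x zT = zT"
  by (metis br_scR sc_zero z_T br_T)
lemma p_z[simp]: "pT zT = zT"
  by (metis p_sc sc_zero z_T p_T)

lemma br_anti: assumes "x \<in> T" "y \<in> T" shows "brT y x = scT (-1) (brT x y)"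
proof -
  have "zT = brT (addT x y) (addT x y)" using assms by (simp add: br_self)
  also have "\<dots> = addT (addT (brT x x) (brT y x)) (addT (brT x y) (brT y y))"
    using assms by (simp only: br_addL br_addR add_T)
  also have "\<dots> = addT (brT x y) (brT y x)"
    using assms by (simp add: br_self add_comm)
  finally have e: "addT (brT x y) (brT y x) = addT (brT x y) (scT (-1) (brT x y))"
    using assms by (simp add: add_neg)
  show ?thesis by (rule add_cancel[OF _ _ _ e]) (use assms in auto)
qed

lemma sc_add_same: "x \<in> T \<Longrightarrow> addT x x = scT 2 x"
  by (metis add_sc one_add_one sc_one)

lemma sc_eq_zero: assumes "x \<in> T" "scT c x = zT" "c \<noteq> 0" shows "x = zT"
proof -
  have "x = scT (inverse c * c) x" using assms by simp
  also have "\<dots> = scT (inverse c) (scT c x)" by (simp only: sc_sc[OF assms(1)])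
  also have "\<dots> = zT" using assms by simp
  finally show ?thesis .
qed


definition M :: "'b monoid" where "M_def": "M = \<lparr>carrier = T, mult = addT, one = zT\<rparr>"

lemma M_cm: "comm_monoid M"
  unfolding comm_monoid_def monoid_def comm_monoid_axioms_def M_def
  by (simp add: add_assoc add_comm add_lcomm)

lemma M_simps[simp]: "carrier M = T" "mult M x y = addT x y" "one M = zT"
  by (simp_all add: M_def)

definition S :: "('x \<Rightarrow> 'b) \<Rightarrow> 'x set \<Rightarrow> 'b" where "S g A = finprod M g A"

lemma S_closed[simp]: "(\<forall>x\<in>A. g x \<in> T) \<Longrightarrow> S g A \<in> T"
  using comm_monoid.finprod_closed[OF M_cm, of g A] by (auto simp: S_def M_simps Pi_def)

lemma S_empty[simp]: "S g {} = zT"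
  using comm_monoid.finprod_empty[OF M_cm] by (simp add: S_def M_simps)

lemma S_insert: "finite A \<Longrightarrow> a \<notin> A \<Longrightarrow> (\<forall>x\<in>insert a A. g x \<in> T) \<Longrightarrow>
   S g (insert a A) = addT (g a) (S g A)"
  using comm_monoid.finprod_insert[OF M_cm, of A a g] by (auto simp: S_def M_simps Pi_def)

lemma S_cong: "A = B \<Longrightarrow> (\<And>x. x \<in> B \<Longrightarrow> g x = h x) \<Longrightarrow> (\<forall>x\<in>B. h x \<in> T) \<Longrightarrow> S g A = S h B"
  unfolding S_def by (rule comm_monoid.finprod_cong'[OF M_cm]) (auto simp: Pi_def)

lemma S_add: "(\<forall>x\<in>A. g x \<in> T) \<Longrightarrow> (\<forall>x\<in>A. h x \<in> T) \<Longrightarrow>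
    S (\<lambda>x. addT (g x) (h x)) A = addT (S g A) (S h A)"
  using comm_monoid.finprod_multf[OF M_cm, of g A h] by (auto simp: S_def M_simps Pi_def)

lemma S_zero: "(\<And>x. x \<in> A \<Longrightarrow> g x = zT) \<Longrightarrow> S g A = zT"
  using comm_monoid.finprod_one_eqI[OF M_cm, of A g] by (auto simp: S_def M_simps)

lemma S_neutral: "finite B \<Longrightarrow> A \<subseteq> B \<Longrightarrow> (\<And>x. x \<in> B - A \<Longrightarrow> g x = zT) \<Longrightarrow>
   (\<forall>x\<in>B. g x \<in> T) \<Longrightarrow> S g A = S g B"
  using comm_monoid.finprod_mono_neutral_cong_left[OF M_cm, of B A g g] by (auto simp: S_def M_simps Pi_def)

lemma S_lin:
  assumes F: "\<And>x y. x \<in> T \<Longrightarrow> y \<in> T \<Longrightarrow> F (addT x y) = addT (F x) (F y)"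
    and Fz: "F zT = zT" and FT: "\<And>x. x \<in> T \<Longrightarrow> F x \<in> T"
    and g: "\<forall>x\<in>A. g x \<in> T"
  shows "F (S g A) = S (\<lambda>x. F (g x)) A"
  using g
proof (induction A rule: infinite_finite_induct)
  case (infinite A)
  then show ?case by (simp add: S_def Fz comm_monoid.finprod_infinite[OF M_cm] M_simps)
next
  case empty then show ?case by (simp add: Fz)
next
  case (insert a A)
  then show ?case by (simp add: S_insert F FT)
qed

lemma S_sc: "\<forall>x\<in>A. g x \<in> T \<Longrightarrow> scT c (S g A) = S (\<lambda>x. scT c (g x)) A"
  by (rule S_lin) (auto simp: sc_add)
lemma S_p: "\<forall>x\<in>A. g x \<in> T \<Longrightarrow> pT (S g A) = S (\<lambda>x. pT (g x)) A"
  by (rule S_lin) (auto simp: p_add)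
lemma S_brL: "\<forall>x\<in>A. g x \<in> T \<Longrightarrow> y \<in> T \<Longrightarrow> brT (S g A) y = S (\<lambda>x. brT (g x) y) A"
  by (rule S_lin[where F="\<lambda>x. brT x y"]) (auto simp: br_addL)
lemma S_brR: "\<forall>x\<in>A. g x \<in> T \<Longrightarrow> y \<in> T \<Longrightarrow> brT y (S g A) = S (\<lambda>x. brT y (g x)) A"
  by (rule S_lin[where F="\<lambda>x. brT y x"]) (auto simp: br_addR)


definition Lin :: "(nat list \<Rightarrow> 'b) \<Rightarrow> 'k ncpoly \<Rightarrow> 'b" where
  "Lin g a = S (\<lambda>w. scT (a w) (g w)) {w. a w \<noteq> 0}"

lemma Lin_closed[simp]: "\<forall>w. g w \<in> T \<Longrightarrow> Lin g a \<in> T"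
  by (simp add: Lin_def)

lemma Lin_sup: assumes g: "\<forall>w. g w \<in> T" and B: "finite B" "{w. a w \<noteq> 0} \<subseteq> B"
  shows "Lin g a = S (\<lambda>w. scT (a w) (g w)) B"
  unfolding Lin_def using g B by (intro S_neutral) auto

lemma Lin_zero[simp]: "Lin g (\<lambda>w. 0) = zT"
  by (simp add: Lin_def)

lemma Lin_add: assumes g: "\<forall>w. g w \<in> T" and a: "fs a" and b: "fs b"
  shows "Lin g (\<lambda>w. a w + b w) = addT (Lin g a) (Lin g b)"
proof -
  let ?B = "{w. a w \<noteq> 0} \<union> {w. b w \<noteq> 0}"
  have fB: "finite ?B" using a b by simp
  have "Lin g (\<lambda>w. a w + b w) = S (\<lambda>w. scT (a w + b w) (g w)) ?B"
    by (rule Lin_sup[OF g fB]) auto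
  also have "\<dots> = S (\<lambda>w. addT (scT (a w) (g w)) (scT (b w) (g w))) ?B"
    using g by (intro S_cong) (auto simp: add_sc)
  also have "\<dots> = addT (S (\<lambda>w. scT (a w) (g w)) ?B) (S (\<lambda>w. scT (b w) (g w)) ?B)"
    using g by (intro S_add) auto
  also have "\<dots> = addT (Lin g a) (Lin g b)"
    using g fB by (simp add: Lin_sup[of g ?B])
  finally show ?thesis .
qed

lemma Lin_smult: assumes g: "\<forall>w. g w \<in> T" and a: "fs a"
  shows "Lin g (\<lambda>w. c * a w) = scT c (Lin g a)"
proof -
  have "Lin g (\<lambda>w. c * a w) = S (\<lambda>w. scT (c * a w) (g w)) {w. a w \<noteq> 0}"
    by (rule Lin_sup[OF g a]) auto
  also have "\<dots> = S (\<lambda>w. scT c (scT (a w) (g w))) {w. a w \<noteq> 0}"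
    using g by (intro S_cong) auto
  also have "\<dots> = scT c (Lin g a)"
    unfolding Lin_def using g by (simp add: S_sc)
  finally show ?thesis .
qed

lemma Lin_mono[simp]: "\<forall>w. g w \<in> T \<Longrightarrow> Lin g (nc_mono u) = g u"
proof -
  assume g: "\<forall>w. g w \<in> T"
  have "{w. nc_mono u w \<noteq> (0::'k)} = {u}" by (auto simp: nc_mono_def)
  then show ?thesis using g by (simp add: Lin_def S_insert nc_mono_def)
qed

lemma Lin_cong: "(\<And>w. a w \<noteq> 0 \<Longrightarrow> g w = g' w) \<Longrightarrow> \<forall>w. g' w \<in> T \<Longrightarrow> Lin g a = Lin g' a"
  unfolding Lin_def by (rule S_cong) auto

lemma Lin_map:
  assumes F: "\<And>x y. x \<in> T \<Longrightarrow> y \<in> T \<Longrightarrow> F (addT x y) = addT (F x) (F y)"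
    and Fs: "\<And>c x. x \<in> T \<Longrightarrow> F (scT c x) = scT c (F x)"
    and FT: "\<And>x. x \<in> T \<Longrightarrow> F x \<in> T"
    and g: "\<forall>w. g w \<in> T"
  shows "F (Lin g a) = Lin (\<lambda>w. F (g w)) a"
proof -
  have Fz: "F zT = zT" using Fs[of zT 0] FT[of zT] by simp
  show ?thesis unfolding Lin_def
    using g by (subst S_lin[where F=F]) (auto simp: F Fz FT Fs)
qed

lemma Lin_mul_mono: assumes g: "\<forall>w. g w \<in> T" and b: "fs b"
  shows "Lin g (nc_mul (nc_mono u) b) = Lin (\<lambda>v. g (u @ v)) b"
  using b
proof (induction b rule: fs_induct)
  case zero then show ?case by (simp add: nc_mul_zeroR)
next
  case (step b v c)
  have e: "nc_mul (nc_mono u) (\<lambda>w. b w + c * nc_mono v w) = (\<lambda>w. nc_mul (nc_mono u) b w + c * nc_mono (u @ v) w)"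
    by (simp add: nc_mul_addR nc_mul_smultR nc_mul_mono)
  have g2: "\<forall>w. g (u @ w) \<in> T" using g by simp
  show ?case unfolding e
    using step g g2 by (simp add: Lin_add Lin_smult fs_mul fs_smult)
qed

lemma Lin_mul: assumes g: "\<forall>w. g w \<in> T" and a: "fs a" and b: "fs b"
  shows "Lin g (nc_mul a b) = Lin (\<lambda>u. Lin (\<lambda>v. g (u @ v)) b) a"
  using a
proof (induction a rule: fs_induct)
  case zero then show ?case by (simp add: nc_mul_zeroL)
next
  case (step a u c)
  have e: "nc_mul (\<lambda>w. a w + c * nc_mono u w) b = (\<lambda>w. nc_mul a b w + c * nc_mul (nc_mono u) b w)"
    by (simp add: nc_mul_addL nc_mul_smultL)
  have g2: "\<forall>w. Lin (\<lambda>v. g (w @ v)) b \<in> T" using g by simp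
  show ?case unfolding e
    using step g g2 b by (simp add: Lin_add Lin_smult fs_mul fs_smult Lin_mul_mono)
qed

end




lemma nc_var_mono: "nc_var i = nc_mono [i]" by (simp add: nc_var_def nc_mono_def)
lemma nc_one_mono: "nc_one = nc_mono []" by (simp add: nc_one_def nc_mono_def)

lemma mul_sum_L: "nc_mul (nc_sum U A) b = nc_sum (\<lambda>i. nc_mul (U i) b) A"
  unfolding nc_mul_def nc_sum_def fun_eq_iff sum_distrib_right
  by (intro allI sum.swap)
lemma mul_sum_R: "nc_mul b (nc_sum U A) = nc_sum (\<lambda>i. nc_mul b (U i)) A"
  unfolding nc_mul_def nc_sum_def fun_eq_iff sum_distrib_left
  by (intro allI sum.swap)

lemma comm_sum: "nc_comm (nc_sum U A) (nc_sum V B) = nc_sum (\<lambda>i. nc_sum (\<lambda>j. nc_comm (U i) (V j)) B) A"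
proof (rule ext)
  fix w
  have "nc_comm (nc_sum U A) (nc_sum V B) w =
     (\<Sum>j\<in>B. \<Sum>i\<in>A. nc_mul (U i) (V j) w) - (\<Sum>i\<in>A. \<Sum>j\<in>B. nc_mul (V j) (U i) w)"
    by (simp only: nc_comm_def nc_add_def nc_smult_def mul_sum_L mul_sum_R) (simp add: nc_sum_def)
  also have "\<dots> = (\<Sum>i\<in>A. \<Sum>j\<in>B. nc_mul (U i) (V j) w - nc_mul (V j) (U i) w)"
    using sum.swap[of "\<lambda>j i. nc_mul (U i) (V j) w" A B] by (simp add: sum_subtractf)
  also have "\<dots> = nc_sum (\<lambda>i. nc_sum (\<lambda>j. nc_comm (U i) (V j)) B) A w"
    by (simp add: nc_sum_def nc_comm_def nc_add_def nc_smult_def)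
  finally show "nc_comm (nc_sum U A) (nc_sum V B) w = nc_sum (\<lambda>i. nc_sum (\<lambda>j. nc_comm (U i) (V j)) B) A w" .
qed

lemma fs_nc_sum: "finite A \<Longrightarrow> (\<forall>i\<in>A. fs (U i)) \<Longrightarrow> fs (nc_sum U A)"
proof (induction A rule: finite_induct)
  case empty then show ?case by (simp add: nc_sum_def)
next
  case (insert x A)
  have "nc_sum U (insert x A) = (\<lambda>w. U x w + nc_sum U A w)" using insert by (simp add: nc_sum_def fun_eq_iff)
  then show ?case using insert fs_add[of "U x" "nc_sum U A"] by simp
qed

context lpd begin

lemma neg_add: "x \<in> T \<Longrightarrow> addT (scT (-1) x) x = zT"
  using add_comm[of "scT (-1) x" x] add_neg[of x] by simp

lemma sub_eq: assumes "x \<in> T" "y \<in> T" "addT x (scT (-1) y) = zT" shows "x = y"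
proof -
  have "x = addT x (addT (scT (-1) y) y)" using assms by (simp add: neg_add)
  also have "\<dots> = addT (addT x (scT (-1) y)) y" by (rule add_assoc[symmetric]) (use assms in simp_all)
  also have "\<dots> = y" using assms by simp
  finally show ?thesis .
qed

lemma jac2: assumes "A \<in> T" "B \<in> T" "x \<in> T"
  shows "brT (brT A B) x = addT (brT A (brT B x)) (scT (-1) (brT B (brT A x)))"
proof -
  have j: "addT (addT (brT A (brT B x)) (brT B (brT x A))) (brT x (brT A B)) = zT"
    using jacobi[OF assms] .
  have e1: "brT B (brT x A) = scT (-1) (brT B (brT A x))"
    using assms by (simp add: br_anti[of A x] br_scR)
  have e2: "brT x (brT A B) = scT (-1) (brT (brT A B) x)"
    using assms by (simp add: br_anti[of x "brT A B"])
  have "addT (addT (brT A (brT B x)) (scT (-1) (brT B (brT A x)))) (scT (-1) (brT (brT A B) x)) = zT"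
    using j e1 e2 by simp
  from sub_eq[OF _ _ this] show ?thesis using assms by simp
qed

lemma sc_cancel: assumes "x \<in> T" "y \<in> T" "scT c x = scT c y" "c \<noteq> 0" shows "x = y"
proof -
  have "x = scT (inverse c * c) x" using assms by simp
  also have "\<dots> = scT (inverse c) (scT c x)" by (simp only: sc_sc[OF assms(1)])
  also have "\<dots> = scT (inverse c) (scT c y)" using assms by simp
  also have "\<dots> = y" using assms by simp
  finally show ?thesis .
qed

end

locale lpdf = lpd T addT zT scT brT pT
  for T addT zT and scT :: "'k::field_char_0 \<Rightarrow> 'b \<Rightarrow> 'b" and brT pT +
  fixes n :: nat and f :: "nat \<Rightarrow> 'b"
  assumes fT: "\<forall>i<n. f i \<in> T"
begin

definition t :: "nat \<Rightarrow> 'b" where "t i = (if i < n then addT (f i) (scT (-1) (pT (f i))) else zT)"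
definition s :: "nat \<Rightarrow> 'b" where "s i = (if i < n then pT (f i) else zT)"

lemma t_T[simp]: "t i \<in> T" using fT by (simp add: t_def)
lemma s_T[simp]: "s i \<in> T" using fT by (simp add: s_def)
lemma p_t[simp]: "pT (t i) = zT" using fT by (simp add: t_def p_add p_sc add_neg)
lemma p_s[simp]: "pT (s i) = s i" using fT by (simp add: s_def)

definition E :: "nat list \<Rightarrow> 'b \<Rightarrow> 'b" where "E w x = foldr (\<lambda>j y. brT (t j) y) w x"

lemma E_Nil[simp]: "E [] x = x" by (simp add: E_def)
lemma E_Cons[simp]: "E (j # w) x = brT (t j) (E w x)" by (simp add: E_def)
lemma E_app: "E (u @ v) x = E u (E v x)" by (simp add: E_def)
lemma E_T[simp]: "x \<in> T \<Longrightarrow> E w x \<in> T" by (induction w) auto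
lemma E_add: "x \<in> T \<Longrightarrow> y \<in> T \<Longrightarrow> E w (addT x y) = addT (E w x) (E w y)"
  by (induction w) (auto simp: br_addR)
lemma E_sc: "x \<in> T \<Longrightarrow> E w (scT c x) = scT c (E w x)"
  by (induction w) (auto simp: br_scR)
lemma E_ker: "x \<in> T \<Longrightarrow> pT x = zT \<Longrightarrow> pT (E w x) = zT"
  by (induction w) (auto simp: p_br)
lemma E_im: "x \<in> T \<Longrightarrow> pT x = x \<Longrightarrow> pT (E w x) = E w x"
  by (induction w) (auto simp: p_br)

definition phi :: "'k ncpoly \<Rightarrow> 'b \<Rightarrow> 'b" where "phi a x = Lin (\<lambda>w. E w x) a"
definition dl :: "nat list \<Rightarrow> 'b" where "dl w = (if w = [] then zT else E (butlast w) (t (last w)))"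
definition psi :: "'k ncpoly \<Rightarrow> 'b" where
  "psi a = Lin (\<lambda>w. scT (inverse (of_nat (length w))) (dl w)) a"

lemma dl_T[simp]: "dl w \<in> T" by (simp add: dl_def)
lemma dl_ker[simp]: "pT (dl w) = zT" by (simp add: dl_def E_ker)
lemma dl_app: "v \<noteq> [] \<Longrightarrow> dl (u @ v) = E u (dl v)"
  by (simp add: dl_def E_app butlast_append)
lemma phi_T[simp]: "x \<in> T \<Longrightarrow> phi a x \<in> T" by (simp add: phi_def)
lemma psi_T[simp]: "psi a \<in> T" by (simp add: psi_def)

lemma Lin_zT: "Lin (\<lambda>w. zT) a = zT"
  by (simp add: Lin_def S_zero)

lemma psi_ker: "fs a \<Longrightarrow> pT (psi a) = zT"
  unfolding psi_def
  by (subst Lin_map[where F=pT]) (auto simp: p_add p_sc Lin_zT)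

lemma phi_im: "fs a \<Longrightarrow> x \<in> T \<Longrightarrow> pT x = x \<Longrightarrow> pT (phi a x) = phi a x"
  unfolding phi_def
  by (subst Lin_map[where F=pT]) (auto simp: p_add p_sc E_im)

lemma E_Lin: "\<forall>w. g w \<in> T \<Longrightarrow> E u (Lin g b) = Lin (\<lambda>v. E u (g v)) b"
  by (rule Lin_map) (auto simp: E_add E_sc)

lemma phi_mul: assumes a: "fs a" and b: "fs b" and x: "x \<in> T"
  shows "phi (nc_mul a b) x = phi a (phi b x)"
proof -
  have "phi (nc_mul a b) x = Lin (\<lambda>u. Lin (\<lambda>v. E (u @ v) x) b) a"
    unfolding phi_def using x a b by (simp add: Lin_mul)
  also have "\<dots> = Lin (\<lambda>u. E u (Lin (\<lambda>v. E v x) b)) a"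
    using x by (intro Lin_cong) (auto simp: E_app E_Lin)
  finally show ?thesis by (simp add: phi_def)
qed

lemma dl_mul: assumes a: "fs a" and b: "fs b" and b0: "b [] = 0"
  shows "Lin dl (nc_mul a b) = phi a (Lin dl b)"
proof -
  have "Lin dl (nc_mul a b) = Lin (\<lambda>u. Lin (\<lambda>v. dl (u @ v)) b) a"
    using a b by (simp add: Lin_mul)
  also have "\<dots> = Lin (\<lambda>u. Lin (\<lambda>v. E u (dl v)) b) a"
  proof (rule Lin_cong)
    fix u
    show "Lin (\<lambda>v. dl (u @ v)) b = Lin (\<lambda>v. E u (dl v)) b"
    proof (rule Lin_cong)
      fix w assume "b w \<noteq> 0"
      then have "w \<noteq> []" using b0 by auto
      then show "dl (u @ w) = E u (dl w)" by (rule dl_app)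
    qed simp
  qed simp
  also have "\<dots> = Lin (\<lambda>u. E u (Lin dl b)) a"
    by (intro Lin_cong) (auto simp: E_Lin)
  finally show ?thesis by (simp add: phi_def)
qed

end




lemma homog0: "(\<forall>w. u w \<noteq> 0 \<longrightarrow> length w = 0) \<Longrightarrow> u [] = 0 \<Longrightarrow> u = (\<lambda>w. 0)"
  by (rule ext) (metis length_0_conv)

lemma fs_ncadd: "fs a \<Longrightarrow> fs b \<Longrightarrow> fs (nc_add a b)" unfolding nc_add_def by (rule fs_add)
lemma fs_ncsmult: "fs a \<Longrightarrow> fs (nc_smult c a)" unfolding nc_smult_def by (rule fs_smult)

context lpdf begin

lemma Lin_ncadd: "\<forall>w. g w \<in> T \<Longrightarrow> fs a \<Longrightarrow> fs b \<Longrightarrow> Lin g (nc_add a b) = addT (Lin g a) (Lin g b)"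
  unfolding nc_add_def by (rule Lin_add)
lemma Lin_ncsmult: "\<forall>w. g w \<in> T \<Longrightarrow> fs a \<Longrightarrow> Lin g (nc_smult c a) = scT c (Lin g a)"
  unfolding nc_smult_def by (rule Lin_smult)
lemma Lin_nczero: "Lin g nc_zero = zT"
  unfolding nc_zero_def by simp

lemma Lin_ncsum: assumes g: "\<forall>w. g w \<in> T"
  shows "finite A \<Longrightarrow> \<forall>i\<in>A. fs (G i) \<Longrightarrow> Lin g (nc_sum G A) = S (\<lambda>i. Lin g (G i)) A"
proof (induction A rule: finite_induct)
  case empty
  have "nc_sum G {} = (\<lambda>w. 0)" by (simp add: nc_sum_def)
  then show ?case by simp
next
  case (insert x A)
  have e: "nc_sum G (insert x A) = (\<lambda>w. G x w + nc_sum G A w)"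
    using insert by (simp add: nc_sum_def fun_eq_iff)
  show ?case unfolding e using insert g
    by (simp add: Lin_add fs_nc_sum S_insert)
qed

lemma psi_deg: assumes u: "fs u" and hom: "\<forall>w. u w \<noteq> 0 \<longrightarrow> length w = m" and u0: "u [] = 0"
  shows "Lin dl u = scT (of_nat m) (psi u)"
proof (cases "m = 0")
  case True
  then have "u = (\<lambda>w. 0)" using hom u0 by (intro homog0) auto
  then show ?thesis by (simp add: psi_def)
next
  case False
  have "psi u = Lin (\<lambda>w. scT (inverse (of_nat m)) (dl w)) u"
    unfolding psi_def by (rule Lin_cong) (use hom in auto)
  also have "\<dots> = scT (inverse (of_nat m)) (Lin dl u)"
    by (rule Lin_map[symmetric]) (auto simp: sc_add mult.commute)
  finally show ?thesis using False by simp
qed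

lemma phi_var: "x \<in> T \<Longrightarrow> phi (nc_var i) x = brT (t i) x"
  by (simp add: phi_def nc_var_mono)
lemma psi_var: "psi (nc_var i) = t i"
  by (simp add: psi_def nc_var_mono dl_def)

lemma phi_comm_step:
  assumes a: "fs a" and b: "fs b" and IHa: "\<forall>x\<in>T. phi a x = brT (psi a) x"
    and IHb: "\<forall>x\<in>T. phi b x = brT (psi b) x"
    and ps: "psi (nc_comm a b) = brT (psi a) (psi b)" and x: "x \<in> T"
  shows "phi (nc_comm a b) x = brT (psi (nc_comm a b)) x"
proof -
  have "phi (nc_comm a b) x = addT (phi (nc_mul a b) x) (scT (-1) (phi (nc_mul b a) x))"
    unfolding phi_def nc_comm_def using a b x by (simp add: Lin_ncadd Lin_ncsmult fs_mul fs_ncadd fs_ncsmult)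
  also have "\<dots> = addT (brT (psi a) (brT (psi b) x)) (scT (-1) (brT (psi b) (brT (psi a) x)))"
    using a b x IHa IHb by (simp add: phi_mul)
  also have "\<dots> = brT (brT (psi a) (psi b)) x"
    using x by (simp add: jac2)
  finally show ?thesis using ps by simp
qed

lemma psi_comm_H:
  assumes Ha: "(p,a) \<in> Hs n" and Hb: "(q,b) \<in> Hs n"
    and IHa: "\<forall>x\<in>T. phi a x = brT (psi a) x" and IHb: "\<forall>x\<in>T. phi b x = brT (psi b) x"
  shows "psi (nc_comm a b) = brT (psi a) (psi b)"
proof -
  have Hc: "(p+q, nc_comm a b) \<in> Hs n" using Ha Hb by (rule H_comm)
  note pa = H_props[OF Ha] and pb = H_props[OF Hb] and pc = H_props[OF Hc]
  have fa: "fs a" "fs b" "fs (nc_comm a b)" using pa pb pc by (auto simp: fa_fs)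
  define X where "X = brT (psi a) (psi b)"
  have XT: "X \<in> T" by (simp add: X_def)
  show ?thesis
  proof (cases "p + q = 0")
    case True
    then have p0: "p = 0" "q = 0" by auto
    have "a = (\<lambda>w. 0)" by (rule homog0) (use pa p0 in simp_all)
    moreover have "nc_comm a b = (\<lambda>w. 0)" by (rule homog0) (use pc p0 in simp_all)
    ultimately show ?thesis by (simp add: psi_def)
  next
    case False
    have da: "Lin dl a = scT (of_nat p) (psi a)" by (rule psi_deg[OF fa(1)]) (use pa in simp_all)
    have db: "Lin dl b = scT (of_nat q) (psi b)" by (rule psi_deg[OF fa(2)]) (use pb in simp_all)
    have dc: "Lin dl (nc_comm a b) = scT (of_nat (p+q)) (psi (nc_comm a b))" by (rule psi_deg[OF fa(3)]) (use pc in simp_all)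
    have "Lin dl (nc_comm a b) = addT (Lin dl (nc_mul a b)) (scT (-1) (Lin dl (nc_mul b a)))"
      unfolding nc_comm_def using fa by (simp add: Lin_ncadd Lin_ncsmult fs_mul fs_ncadd fs_ncsmult)
    also have "\<dots> = addT (phi a (Lin dl b)) (scT (-1) (phi b (Lin dl a)))"
      using fa pa pb by (simp add: dl_mul)
    also have "\<dots> = addT (scT (of_nat q) X) (scT (-1) (scT (of_nat p) (scT (-1) X)))"
      using IHa IHb da db by (simp add: X_def br_scR br_anti[of "psi a" "psi b"])
    also have "\<dots> = scT (of_nat (p+q)) X"
      using XT by (simp add: add_sc add_comm)
    finally have "scT (of_nat (p+q)) (psi (nc_comm a b)) = scT (of_nat (p+q)) X" using dc by simp
    moreover have nz: "(of_nat (p+q)::'k) \<noteq> 0" using False by (simp only: of_nat_eq_0_iff not_False_eq_True)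
    ultimately have "psi (nc_comm a b) = X" by (rule sc_cancel[OF psi_T XT])
    then show ?thesis by (simp add: X_def)
  qed
qed

lemma H_claim: "(m,u) \<in> Hs n \<Longrightarrow> \<forall>x\<in>T. phi u x = brT (psi u) x"
proof (induction m u rule: Hs.induct)
  case (H_zero m) then show ?case by (simp add: phi_def psi_def Lin_nczero)
next
  case (H_var i) then show ?case by (simp add: phi_var psi_var)
next
  case (H_add m a b)
  have f: "fs a" "fs b" using H_props[OF H_add.hyps(1)] H_props[OF H_add.hyps(2)] by (auto simp: fa_fs)
  show ?case using H_add.IH f by (simp add: phi_def psi_def Lin_ncadd br_addL)
next
  case (H_smult m a c)
  have f: "fs a" using H_props[OF H_smult.hyps(1)] by (auto simp: fa_fs)
  show ?case using H_smult.IH f by (simp add: phi_def psi_def Lin_ncsmult br_scL)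
next
  case (H_comm p a q b)
  have f: "fs a" "fs b" using H_props[OF H_comm.hyps(1)] H_props[OF H_comm.hyps(2)] by (auto simp: fa_fs)
  have ps: "psi (nc_comm a b) = brT (psi a) (psi b)"
    using psi_comm_H[OF H_comm.hyps H_comm.IH] .
  show ?case by (intro ballI) (rule phi_comm_step[OF f H_comm.IH ps])
qed


lemma psi_sum: "finite A \<Longrightarrow> \<forall>i\<in>A. fs (G i) \<Longrightarrow> psi (nc_sum G A) = S (\<lambda>i. psi (G i)) A"
  unfolding psi_def by (rule Lin_ncsum) auto

lemma fl_fs: "u \<in> free_lie n \<Longrightarrow> fs u" by (rule fa_fs[OF fl_fa])

lemma psi_hom: assumes u: "u \<in> free_lie n" and v: "v \<in> free_lie n"
  shows "psi (nc_comm u v) = brT (psi u) (psi v)"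
proof -
  obtain N1 where N1: "\<forall>w. u w \<noteq> 0 \<longrightarrow> length w \<le> N1" using fs_bound[OF fl_fs[OF u]] by blast
  obtain N2 where N2: "\<forall>w. v w \<noteq> 0 \<longrightarrow> length w \<le> N2" using fs_bound[OF fl_fs[OF v]] by blast
  define N where "N = max N1 N2"
  define U where "U m = nc_hom m u" for m
  define V where "V m = nc_hom m v" for m
  have du: "u = nc_sum U {..N}" unfolding U_def by (rule hom_decomp) (use N1 in \<open>auto simp: N_def\<close>)
  have dv: "v = nc_sum V {..N}" unfolding V_def by (rule hom_decomp) (use N2 in \<open>auto simp: N_def\<close>)
  have HU: "(m, U m) \<in> Hs n" for m unfolding U_def by (rule fl_hom[OF u])
  have HV: "(m, V m) \<in> Hs n" for m unfolding V_def by (rule fl_hom[OF v])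
  have fU: "fs (U m)" for m using H_props[OF HU] fa_fs by blast
  have fV: "fs (V m)" for m using H_props[OF HV] fa_fs by blast
  have fC: "fs (nc_comm (U i) (V j))" for i j using H_props[OF H_comm[OF HU HV]] fa_fs by blast
  have fC2: "fs (nc_sum (\<lambda>j. nc_comm (U i) (V j)) {..N})" for i by (rule fs_nc_sum) (auto simp: fC)
  have "psi (nc_comm u v) = psi (nc_sum (\<lambda>i. nc_sum (\<lambda>j. nc_comm (U i) (V j)) {..N}) {..N})"
    by (subst du, subst dv, simp only: comm_sum)
  also have "\<dots> = S (\<lambda>i. S (\<lambda>j. psi (nc_comm (U i) (V j))) {..N}) {..N}"
    by (simp add: psi_sum fC fC2)
  also have "\<dots> = S (\<lambda>i. S (\<lambda>j. brT (psi (U i)) (psi (V j))) {..N}) {..N}"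
    by (simp add: psi_comm_H[OF HU HV H_claim[OF HU] H_claim[OF HV]])
  also have "\<dots> = S (\<lambda>i. brT (psi (U i)) (S (\<lambda>j. psi (V j)) {..N})) {..N}"
    by (rule S_cong) (auto simp: S_brR)
  also have "\<dots> = brT (S (\<lambda>i. psi (U i)) {..N}) (S (\<lambda>j. psi (V j)) {..N})"
    by (simp add: S_brL)
  also have "\<dots> = brT (psi u) (psi v)"
  proof -
    have "psi u = S (\<lambda>i. psi (U i)) {..N}" by (subst du) (simp add: psi_sum fU)
    moreover have "psi v = S (\<lambda>i. psi (V i)) {..N}" by (subst dv) (simp add: psi_sum fV)
    ultimately show ?thesis by simp
  qed
  finally show ?thesis .
qed

lemma phi_ad: "u \<in> free_lie n \<Longrightarrow> \<forall>x\<in>T. phi u x = brT (psi u) x"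
proof (induction u rule: free_lie.induct)
  case fl_zero then show ?case by (simp add: phi_def psi_def Lin_nczero)
next
  case (fl_var i) then show ?case by (simp add: phi_var psi_var)
next
  case (fl_add a b)
  have f: "fs a" "fs b" using fl_add.hyps by (auto simp: fl_fs)
  show ?case using fl_add.IH f by (simp add: phi_def psi_def Lin_ncadd br_addL)
next
  case (fl_smult a c)
  have f: "fs a" using fl_smult.hyps by (auto simp: fl_fs)
  show ?case using fl_smult.IH f by (simp add: phi_def psi_def Lin_ncsmult br_scL)
next
  case (fl_comm a b)
  have f: "fs a" "fs b" using fl_comm.hyps by (auto simp: fl_fs)
  have ps: "psi (nc_comm a b) = brT (psi a) (psi b)" using psi_hom fl_comm.hyps by blast
  show ?case by (intro ballI) (rule phi_comm_step[OF f fl_comm.IH ps])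
qed

lemma im_abelian: assumes x: "x \<in> T" "pT x = x" and y: "y \<in> T" "pT y = y"
  shows "brT x y = zT"
proof -
  define B where "B = brT x y"
  have BT: "B \<in> T" using x y by (simp add: B_def)
  have e1: "pT B = scT 2 B" using x y by (simp add: B_def p_br sc_add_same)
  have "scT 2 (scT 2 B) = pT (pT B)" using BT by (simp add: e1 p_sc)
  also have "\<dots> = pT B" using BT by (rule p_p)
  also have "\<dots> = scT 2 B" by (rule e1)
  finally have "addT (scT 2 B) (scT 2 B) = addT (scT 2 B) zT"
    using BT by (simp add: sc_add_same)
  then have "scT 2 B = zT" using BT by (intro add_cancel[of "scT 2 B" zT "scT 2 B"]) auto
  then have "B = zT" using BT by (intro sc_eq_zero[of B 2]) auto
  then show ?thesis by (simp add: B_def)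
qed

lemma phi_ncadd: "fs a \<Longrightarrow> fs b \<Longrightarrow> x \<in> T \<Longrightarrow> phi (nc_add a b) x = addT (phi a x) (phi b x)"
  unfolding phi_def by (rule Lin_ncadd) auto
lemma phi_ncsmult: "fs a \<Longrightarrow> x \<in> T \<Longrightarrow> phi (nc_smult c a) x = scT c (phi a x)"
  unfolding phi_def by (rule Lin_ncsmult) auto
lemma phi_nczero: "phi nc_zero x = zT" unfolding phi_def by (rule Lin_nczero)
lemma phi_one: "x \<in> T \<Longrightarrow> phi nc_one x = x" by (simp add: phi_def nc_one_mono)
lemma psi_ncadd: "fs a \<Longrightarrow> fs b \<Longrightarrow> psi (nc_add a b) = addT (psi a) (psi b)"
  unfolding psi_def by (rule Lin_ncadd) auto
lemma psi_ncsmult: "fs a \<Longrightarrow> psi (nc_smult c a) = scT c (psi a)"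
  unfolding psi_def by (rule Lin_ncsmult) auto
lemma psi_nczero: "psi nc_zero = zT" unfolding psi_def by (rule Lin_nczero)

lemma add_swap4: assumes "a \<in> T" "b \<in> T" "c \<in> T" "d \<in> T"
  shows "addT (addT a b) (addT c d) = addT (addT a c) (addT b d)"
proof -
  have "addT (addT a b) (addT c d) = addT a (addT b (addT c d))" using assms by (simp add: add_assoc)
  also have "\<dots> = addT a (addT c (addT b d))" using assms by (simp add: add_lcomm[of b c d])
  also have "\<dots> = addT (addT a c) (addT b d)" using assms by (simp add: add_assoc)
  finally show ?thesis .
qed

definition hmap :: "'k lv \<Rightarrow> 'b" where
  "hmap x = addT (psi (fst x)) (S (\<lambda>i. phi (snd x i) (s i)) {..<n})"

lemma hmap_T: "hmap x \<in> T" by (simp add: hmap_def)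

lemma fm_fs: "v \<in> free_module n \<Longrightarrow> i < n \<Longrightarrow> fs (v i)"
  unfolding free_module_def by (auto intro!: fa_fs)

definition SY :: "(nat \<Rightarrow> 'k ncpoly) \<Rightarrow> 'b" where "SY v = S (\<lambda>i. phi (v i) (s i)) {..<n}"

lemma SY_T[simp]: "SY v \<in> T" by (simp add: SY_def)

lemma hmap_pair: "hmap (l, v) = addT (psi l) (SY v)" by (simp add: hmap_def SY_def)

lemma SY_im: "v \<in> free_module n \<Longrightarrow> pT (SY v) = SY v"
  unfolding SY_def by (subst S_p) (auto intro!: S_cong simp: phi_im fm_fs)

lemma hmap_add: assumes x: "x \<in> lv_carrier n" and y: "y \<in> lv_carrier n"
  shows "hmap (lv_add x y) = addT (hmap x) (hmap y)"
proof -
  obtain l1 v1 where xe: "x = (l1, v1)" by (cases x)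
  obtain l2 v2 where ye: "y = (l2, v2)" by (cases y)
  have l: "fs l1" "fs l2" using x y by (auto simp: xe ye lv_carrier_def fl_fs)
  have v: "v1 \<in> free_module n" "v2 \<in> free_module n" using x y by (auto simp: xe ye lv_carrier_def)
  have "SY (\<lambda>i. nc_add (v1 i) (v2 i)) = S (\<lambda>i. addT (phi (v1 i) (s i)) (phi (v2 i) (s i))) {..<n}"
    unfolding SY_def by (rule S_cong) (auto simp: phi_ncadd fm_fs v)
  also have "\<dots> = addT (SY v1) (SY v2)" by (simp add: S_add SY_def)
  finally have e: "SY (\<lambda>i. nc_add (v1 i) (v2 i)) = addT (SY v1) (SY v2)" .
  show ?thesis
    by (simp add: xe ye lv_add_def hmap_pair e psi_ncadd l add_swap4)
qed

lemma hmap_smult: assumes x: "x \<in> lv_carrier n"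
  shows "hmap (lv_smult c x) = scT c (hmap x)"
proof -
  obtain l1 v1 where xe: "x = (l1, v1)" by (cases x)
  have l: "fs l1" using x by (auto simp: xe lv_carrier_def fl_fs)
  have v: "v1 \<in> free_module n" using x by (auto simp: xe lv_carrier_def)
  have "SY (\<lambda>i. nc_smult c (v1 i)) = S (\<lambda>i. scT c (phi (v1 i) (s i))) {..<n}"
    unfolding SY_def by (rule S_cong) (auto simp: phi_ncsmult fm_fs v)
  also have "\<dots> = scT c (SY v1)" by (simp add: S_sc SY_def)
  finally have e: "SY (\<lambda>i. nc_smult c (v1 i)) = scT c (SY v1)" .
  show ?thesis
    by (simp add: xe lv_smult_def hmap_pair e psi_ncsmult l sc_add)
qed

lemma hmap_proj: assumes x: "x \<in> lv_carrier n"
  shows "hmap (lv_proj x) = pT (hmap x)"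
proof -
  obtain l1 v1 where xe: "x = (l1, v1)" by (cases x)
  have l: "fs l1" using x by (auto simp: xe lv_carrier_def fl_fs)
  have v: "v1 \<in> free_module n" using x by (auto simp: xe lv_carrier_def)
  show ?thesis
    by (simp add: xe lv_proj_def hmap_pair psi_nczero p_add psi_ker l SY_im v)
qed

lemma hmap_bracket: assumes x: "x \<in> lv_carrier n" and y: "y \<in> lv_carrier n"
  shows "hmap (lv_bracket x y) = brT (hmap x) (hmap y)"
proof -
  obtain l1 v1 where xe: "x = (l1, v1)" by (cases x)
  obtain l2 v2 where ye: "y = (l2, v2)" by (cases y)
  have L: "l1 \<in> free_lie n" "l2 \<in> free_lie n" using x y by (auto simp: xe ye lv_carrier_def)
  have l: "fs l1" "fs l2" using L by (auto simp: fl_fs)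
  have v: "v1 \<in> free_module n" "v2 \<in> free_module n" using x y by (auto simp: xe ye lv_carrier_def)
  define P1 where "P1 = psi l1"
  define P2 where "P2 = psi l2"
  have PT: "P1 \<in> T" "P2 \<in> T" by (simp_all add: P1_def P2_def)
  have "SY (\<lambda>i. nc_add (lie_act l1 v2 i) (nc_smult (-1) (lie_act l2 v1 i))) =
      S (\<lambda>i. addT (brT P1 (phi (v2 i) (s i))) (scT (-1) (brT P2 (phi (v1 i) (s i))))) {..<n}"
    unfolding SY_def
  proof (rule S_cong)
    fix i assume "i \<in> {..<n}"
    then have f: "fs (v1 i)" "fs (v2 i)" using v by (auto simp: fm_fs)
    show "phi (nc_add (lie_act l1 v2 i) (nc_smult (-1) (lie_act l2 v1 i))) (s i) =
      addT (brT P1 (phi (v2 i) (s i))) (scT (-1) (brT P2 (phi (v1 i) (s i))))"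
      using f l phi_ad[OF L(1)] phi_ad[OF L(2)]
      by (simp add: lie_act_def phi_ncadd phi_ncsmult fs_mul fs_ncsmult phi_mul P1_def P2_def)
  qed (simp_all add: PT)
  also have "\<dots> = addT (brT P1 (SY v2)) (scT (-1) (brT P2 (SY v1)))"
    using PT by (simp add: S_add S_sc S_brR SY_def)
  finally have e: "SY (\<lambda>i. nc_add (lie_act l1 v2 i) (nc_smult (-1) (lie_act l2 v1 i))) =
      addT (brT P1 (SY v2)) (scT (-1) (brT P2 (SY v1)))" .
  have ab: "brT (SY v1) (SY v2) = zT" using v by (intro im_abelian) (auto simp: SY_im)
  have an: "brT (SY v1) P2 = scT (-1) (brT P2 (SY v1))" by (rule br_anti[OF PT(2) SY_T])
  have "hmap (lv_bracket x y) = addT (brT P1 P2) (addT (brT P1 (SY v2)) (scT (-1) (brT P2 (SY v1))))"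
    by (simp add: xe ye lv_bracket_def hmap_pair e psi_hom[OF L] P1_def P2_def)
  also have "\<dots> = addT (addT (brT P1 P2) (brT P1 (SY v2))) (addT (brT (SY v1) P2) (brT (SY v1) (SY v2)))"
    using PT by (simp add: ab an add_assoc)
  also have "\<dots> = addT (addT (brT P1 P2) (brT (SY v1) P2)) (addT (brT P1 (SY v2)) (brT (SY v1) (SY v2)))"
    by (rule add_swap4) (simp_all add: PT)
  also have "\<dots> = brT (addT P1 (SY v1)) (addT P2 (SY v2))"
    using PT by (simp add: br_addL br_addR)
  also have "\<dots> = brT (hmap x) (hmap y)"
    by (simp add: xe ye hmap_pair P1_def P2_def)
  finally show ?thesis .
qed

lemma hmap_gen: assumes i: "i < n" shows "hmap (lv_gen i) = f i"
proof -
  have "SY (mod_gen i) = S (\<lambda>j. if j = i then s i else zT) {..<n}"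
    unfolding SY_def by (rule S_cong) (auto simp: mod_gen_def phi_one phi_nczero)
  also have "\<dots> = s i"
  proof -
    have e: "{..<n} = insert i ({..<n} - {i})" using i by auto
    have "S (\<lambda>j. if j = i then s i else zT) (insert i ({..<n} - {i})) =
        addT (s i) (S (\<lambda>j. if j = i then s i else zT) ({..<n} - {i}))"
      by (subst S_insert) auto
    also have "\<dots> = s i" by (subst S_zero) auto
    finally show ?thesis using e by simp
  qed
  finally have e: "SY (mod_gen i) = s i" .
  have fi: "f i \<in> T" using fT i by simp
  have "hmap (lv_gen i) = addT (t i) (s i)"
    by (simp add: lv_gen_def hmap_pair e psi_var)
  also have "\<dots> = addT (f i) (addT (scT (-1) (pT (f i))) (pT (f i)))"
    using i fi by (simp add: t_def s_def add_assoc)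
  also have "\<dots> = f i" using fi by (simp add: neg_add)
  finally show ?thesis .
qed

end




inductive_set Gen :: "nat \<Rightarrow> 'k::field lv set" for n where
  G_gen: "i < n \<Longrightarrow> lv_gen i \<in> Gen n"
| G_zero: "lv_zero \<in> Gen n"
| G_add: "x \<in> Gen n \<Longrightarrow> y \<in> Gen n \<Longrightarrow> lv_add x y \<in> Gen n"
| G_smult: "x \<in> Gen n \<Longrightarrow> lv_smult c x \<in> Gen n"
| G_br: "x \<in> Gen n \<Longrightarrow> y \<in> Gen n \<Longrightarrow> lv_bracket x y \<in> Gen n"
| G_proj: "x \<in> Gen n \<Longrightarrow> lv_proj x \<in> Gen n"

lemma Gen_carrier: "x \<in> Gen n \<Longrightarrow> x \<in> lv_carrier n"
  by (induction rule: Gen.induct)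
     (auto intro: lv_gen_closed lv_zero_closed lv_add_closed lv_smult_closed lv_bracket_closed lv_proj_closed)

definition slot :: "nat \<Rightarrow> 'k::field ncpoly \<Rightarrow> nat \<Rightarrow> 'k ncpoly" where
  "slot i a = (\<lambda>k. if k = i then a else nc_zero)"

lemma gen_lie: fixes l :: "'k::field ncpoly" shows "l \<in> free_lie n \<Longrightarrow> (l, \<lambda>i. nc_zero) \<in> Gen n"
proof (induction rule: free_lie.induct)
  case fl_zero
  then show ?case using G_zero[of n] by (simp add: lv_zero_def)
next
  case (fl_var i)
  have "(nc_var i, \<lambda>i. nc_zero) = (lv_add :: 'k lv \<Rightarrow> _) (lv_gen i) (lv_smult (-1) (lv_proj (lv_gen i)))"
    by (simp add: ncs lv_gen_def mod_gen_def fun_eq_iff nc_one_def)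
  then show ?case using fl_var by (simp add: G_add G_smult G_proj G_gen)
next
  case (fl_add a b)
  have "(nc_add a b, \<lambda>i. nc_zero) = (lv_add :: 'k lv \<Rightarrow> _) (a, \<lambda>i. nc_zero) (b, \<lambda>i. nc_zero)"
    by (simp add: lv_add_def nc_add_def nc_zero_def)
  then show ?case using fl_add by (simp add: G_add)
next
  case (fl_smult a c)
  have "(nc_smult c a, \<lambda>i. nc_zero) = lv_smult c (a, \<lambda>i. nc_zero)"
    by (simp add: lv_smult_def nc_smult_def nc_zero_def)
  then show ?case using fl_smult by (simp add: G_smult)
next
  case (fl_comm a b)
  have "(nc_comm a b, \<lambda>i. nc_zero) = lv_bracket (a, \<lambda>i. nc_zero) (b, \<lambda>i. nc_zero)"
    by (simp add: lv_bracket_def lie_act_def ncs)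
  then show ?case using fl_comm by (simp add: G_br)
qed

lemma gen_mono: fixes w :: "nat list" shows "i < n \<Longrightarrow> \<forall>j\<in>set w. j < n \<Longrightarrow> (nc_zero, slot i (nc_mono w) :: nat \<Rightarrow> 'k::field ncpoly) \<in> Gen n"
proof (induction w)
  case Nil
  have "(nc_zero, slot i (nc_mono [])) = (lv_proj (lv_gen i) :: 'k lv)"
    by (simp add: lv_proj_def lv_gen_def slot_def mod_gen_def nc_one_def nc_mono_def fun_eq_iff)
  then show ?case using Nil by (simp add: G_proj G_gen)
next
  case (Cons j w)
  have "(nc_zero, slot i (nc_mono (j # w))) = (lv_bracket :: 'k lv \<Rightarrow> _) (nc_var j, \<lambda>i. nc_zero) (nc_zero, slot i (nc_mono w))"
    by (simp add: lv_bracket_def lie_act_def slot_def fun_eq_iff nc_var_mono nc_mul_mono[of "[j]" w, simplified]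
        ncs)
  moreover have g1: "(nc_var j, \<lambda>i. nc_zero) \<in> Gen n" using Cons by (simp add: gen_lie fl_var)
  moreover have g2: "(nc_zero, slot i (nc_mono w) :: nat \<Rightarrow> 'k ncpoly) \<in> Gen n" using Cons by simp
  ultimately show ?case using G_br[OF g1 g2] by simp
qed

lemma gen_slot: fixes a :: "'k::field ncpoly" assumes a: "a \<in> free_assoc n" and i: "i < n" shows "(nc_zero, slot i a) \<in> Gen n"
proof -
  have fa: "fs a" using a by (rule fa_fs)
  then show ?thesis
  proof (induction a rule: fs_induct)
    case zero
    have "(nc_zero, slot i (\<lambda>w. 0)) = (lv_zero :: 'k lv)" by (simp add: lv_zero_def slot_def nc_zero_def fun_eq_iff)
    then show ?case by (simp add: G_zero)
  next
    case (step b u c)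
    have "\<forall>j\<in>set u. j < n" using step(3) a by (auto simp: free_assoc_def)
    then have g: "(nc_zero, slot i (nc_mono u)) \<in> Gen n" by (rule gen_mono[OF i])
    have "(nc_zero, slot i (\<lambda>w. b w + c * nc_mono u w)) =
        (lv_add :: 'k lv \<Rightarrow> _) (nc_zero, slot i b) (lv_smult c (nc_zero, slot i (nc_mono u)))"
      by (simp add: lv_add_def lv_smult_def slot_def nc_add_def nc_smult_def nc_zero_def fun_eq_iff)
    then show ?case using step g by (metis G_add G_smult)
  qed
qed

lemma gen_module: fixes v :: "nat \<Rightarrow> 'k::field ncpoly" assumes v: "v \<in> free_module n" shows "(nc_zero, v) \<in> Gen n"
proof -
  have "k \<le> n \<Longrightarrow> (nc_zero, \<lambda>i. if i < k then v i else nc_zero) \<in> Gen n" for k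
  proof (induction k)
    case 0
    have "(nc_zero, \<lambda>i. if i < 0 then v i else nc_zero) = (lv_zero :: 'k lv)" by (simp add: lv_zero_def nc_zero_def)
    then show ?case by (simp add: G_zero)
  next
    case (Suc k)
    have vk: "v k \<in> free_assoc n" using v Suc by (simp add: free_module_def)
    have "(nc_zero, \<lambda>i. if i < Suc k then v i else nc_zero) =
        (lv_add :: 'k lv \<Rightarrow> _) (nc_zero, \<lambda>i. if i < k then v i else nc_zero) (nc_zero, slot k (v k))"
      by (simp add: lv_add_def slot_def nc_add_def nc_zero_def fun_eq_iff)
    then show ?case using Suc gen_slot[OF vk] by (simp add: G_add)
  qed
  from this[of n] have "(nc_zero, \<lambda>i. if i < n then v i else nc_zero) \<in> Gen n" by simp
  moreover have "(\<lambda>i. if i < n then v i else nc_zero) = v" using v by (auto simp: free_module_def)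
  ultimately show ?thesis by simp
qed

lemma carrier_Gen: assumes x: "x \<in> lv_carrier n" shows "x \<in> Gen n"
proof -
  obtain l v where xe: "x = (l, v)" by (cases x)
  have l: "l \<in> free_lie n" and v: "v \<in> free_module n" using x xe by (auto simp: lv_carrier_def)
  have "x = lv_add (l, \<lambda>i. nc_zero) (nc_zero, v)"
    by (simp add: xe lv_add_def nc_add_def nc_zero_def)
  then show ?thesis using gen_lie[OF l] gen_module[OF v] by (simp add: G_add)
qed

context lpd begin

lemma hom_zero: assumes h: "lie_pd_hom (lv_carrier n) lv_add lv_smult lv_bracket lv_proj T addT scT brT pT h"
  shows "h lv_zero = zT"
proof -
  have "(lv_smult 0 lv_zero :: 'k lv) = lv_zero" by (simp add: lv_smult_def lv_zero_def nc_smult_def nc_zero_def)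
  moreover have "h (lv_smult 0 lv_zero) = scT 0 (h lv_zero)"
    using h lv_zero_closed[of n] unfolding lie_pd_hom_def by blast
  ultimately have "h lv_zero = scT 0 (h lv_zero)" by simp
  also have "\<dots> = zT"
  proof -
    have "h lv_zero \<in> T" using h lv_zero_closed[of n] unfolding lie_pd_hom_def by blast
    then show ?thesis by simp
  qed
  finally show ?thesis .
qed

lemma hom_unique:
  assumes h1: "lie_pd_hom (lv_carrier n) lv_add lv_smult lv_bracket lv_proj T addT scT brT pT h1"
    and h2: "lie_pd_hom (lv_carrier n) lv_add lv_smult lv_bracket lv_proj T addT scT brT pT h2"
    and g: "\<forall>i<n. h1 (lv_gen i) = h2 (lv_gen i)"
  shows "x \<in> Gen n \<Longrightarrow> h1 x = h2 x"
proof (induction rule: Gen.induct)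
  case (G_gen i) then show ?case using g by simp
next
  case G_zero then show ?case using hom_zero[OF h1] hom_zero[OF h2] by simp
next
  case (G_add x y)
  have c: "x \<in> lv_carrier n" "y \<in> lv_carrier n" using G_add.hyps by (auto intro: Gen_carrier)
  show ?case using G_add.IH c h1 h2 by (simp add: lie_pd_hom_def)
next
  case (G_smult x c)
  have c: "x \<in> lv_carrier n" using G_smult.hyps by (auto intro: Gen_carrier)
  show ?case using G_smult.IH c h1 h2 by (simp add: lie_pd_hom_def)
next
  case (G_br x y)
  have c: "x \<in> lv_carrier n" "y \<in> lv_carrier n" using G_br.hyps by (auto intro: Gen_carrier)
  show ?case using G_br.IH c h1 h2 by (simp add: lie_pd_hom_def)
next
  case (G_proj x)
  have c: "x \<in> lv_carrier n" using G_proj.hyps by (auto intro: Gen_carrier)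
  show ?case using G_proj.IH c h1 h2 by (simp add: lie_pd_hom_def)
qed

end

theorem theorem3:
  fixes n :: nat
    and T :: "'b set" and addT :: "'b \<Rightarrow> 'b \<Rightarrow> 'b" and zT :: 'b
    and scT :: "'k::field_char_0 \<Rightarrow> 'b \<Rightarrow> 'b"
    and brT :: "'b \<Rightarrow> 'b \<Rightarrow> 'b" and pT :: "'b \<Rightarrow> 'b"
    and f :: "nat \<Rightarrow> 'b"
  assumes "infinite (UNIV :: 'k set)"
  shows "lie_pd_on (lv_carrier n) lv_add lv_zero (lv_smult :: 'k \<Rightarrow> _) lv_bracket lv_proj
    \<and> (\<forall>i<n. (lv_gen i :: 'k lv) \<in> lv_carrier n)
    \<and> (lie_pd_on T addT zT scT brT pT \<longrightarrow> (\<forall>i<n. f i \<in> T) \<longrightarrow>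
        (\<exists>h. lie_pd_hom (lv_carrier n) lv_add lv_smult lv_bracket lv_proj T addT scT brT pT h
             \<and> (\<forall>i<n. h (lv_gen i) = f i)
             \<and> (\<forall>h'. lie_pd_hom (lv_carrier n) lv_add lv_smult lv_bracket lv_proj T addT scT brT pT h'
                     \<and> (\<forall>i<n. h' (lv_gen i) = f i) \<longrightarrow> (\<forall>x\<in>lv_carrier n. h' x = h x))))"
proof (intro conjI impI)
  show "lie_pd_on (lv_carrier n) lv_add lv_zero (lv_smult :: 'k \<Rightarrow> _) lv_bracket lv_proj"
    by (rule lv_lie_pd)
  show "\<forall>i<n. (lv_gen i :: 'k lv) \<in> lv_carrier n" by (simp add: lv_gen_closed)
next
  assume L: "lie_pd_on T addT zT scT brT pT" and fT: "\<forall>i<n. f i \<in> T"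
  interpret lpdf T addT zT scT brT pT n f
    using L fT by unfold_locales auto
  have hom: "lie_pd_hom (lv_carrier n) lv_add lv_smult lv_bracket lv_proj T addT scT brT pT hmap"
    unfolding lie_pd_hom_def
    by (simp add: hmap_T hmap_add hmap_smult hmap_bracket hmap_proj)
  have gens: "\<forall>i<n. hmap (lv_gen i) = f i" by (simp add: hmap_gen)
  show "\<exists>h. lie_pd_hom (lv_carrier n) lv_add lv_smult lv_bracket lv_proj T addT scT brT pT h
             \<and> (\<forall>i<n. h (lv_gen i) = f i)
             \<and> (\<forall>h'. lie_pd_hom (lv_carrier n) lv_add lv_smult lv_bracket lv_proj T addT scT brT pT h'
                     \<and> (\<forall>i<n. h' (lv_gen i) = f i) \<longrightarrow> (\<forall>x\<in>lv_carrier n. h' x = h x))"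
  proof (intro exI conjI)
    show "lie_pd_hom (lv_carrier n) lv_add lv_smult lv_bracket lv_proj T addT scT brT pT hmap" by (rule hom)
    show "\<forall>i<n. hmap (lv_gen i) = f i" by (rule gens)
  next
    show "\<forall>h'. lie_pd_hom (lv_carrier n) lv_add lv_smult lv_bracket lv_proj T addT scT brT pT h'
                     \<and> (\<forall>i<n. h' (lv_gen i) = f i) \<longrightarrow> (\<forall>x\<in>(lv_carrier n :: 'k lv set). h' x = hmap x)"
    proof (intro allI impI ballI)
    fix h' and x :: "'k lv"
    assume h': "lie_pd_hom (lv_carrier n) lv_add lv_smult lv_bracket lv_proj T addT scT brT pT h'
                     \<and> (\<forall>i<n. h' (lv_gen i) = f i)"
      and x: "x \<in> lv_carrier n"
    show "h' x = hmap x"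
      using hom_unique[of n h' hmap, OF conjunct1[OF h'] hom] h' gens carrier_Gen[OF x] by simp
  qed
  qed
qed


end
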